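(* Assume $(\lrcorner)$. Then there exist a map $c:[\omega_2]^2\to\omega_1$, a monotone map $m:[\omega_2]^{<\omega}\to[\omega_2]^{<\omega}$ and a map $r:\omega_2\to\omega_2$ such that: (1) for every $a\in[\omega_2]^{<\omega}$ and all $\alpha,\beta\in m(a)$ with $\alpha\neq\beta$, we have $\mathcal{A}^c_{\alpha,\beta}\subseteq m(a)$; (2) whenever $d$ is a finite subset of $\omega_2+\omega$, $e:[d]^2\to\omega_1$ and $s:d\to\omega_2$ are functions with $c\restriction[d\cap\omega_2]^2=e\restriction[d\cap\omega_2]^2$, $r\restriction(d\cap\omega_2)=s\restriction(d\cap\omega_2)$, and $\mathcal{A}^e_{\alpha,\beta}\subseteq\omega_2$ for all $\alpha,\beta\in d\cap\omega_2$ with $\alpha\neq\beta$, there exists an injection $\iota:d\to\omega_2$ with $\iota\restriction(d\cap\omega_2)=\mathrm{id}_{d\cap\omega_2}$, $c(\iota(\alpha),\iota(\beta))=e(\alpha,\beta)$ for all distinct $\alpha,\beta\in d$, and $r(\iota(\alpha))=s(\alpha)$ for all $\alpha\in d$.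
   Context: For a set $d$, $[d]^2$ is the set of two-element subsets of $d$ and $[d]^{<\omega}$ the set of finite subsets; for a function $c$ with domain $[d]^2$ write $c(x,y)$ for $c(\{x,y\})$, and for distinct $x,y\in d$ let $\mathcal{A}^c_{x,y}=\{z\in d\setminus\{x,y\}: c(x,z)=c(y,z)\}$. A map $m:[X]^{<\omega}\to[X]^{<\omega}$ is monotone if $a\subseteq m(a)$ for all finite $a\subseteq X$. The principle $(\lrcorner)$: for every sequence $\langle f_\alpha:\alpha<\omega_1\rangle$ of functions from $\omega_1$ to $\omega_1$, every finite $F\subseteq\omega_1$ and every monotone $m:[\omega_1]^{<\omega}\to[\omega_1]^{<\omega}$, there is $g:\omega_1\to\omega_1$ with $F\cap\mathrm{ran}(g)=\emptyset$ such that for every $a\in[\omega_1]^{<\omega}$ there is $b\in[\omega_1]^{<\omega}$ with $a\subseteq b$ and $\{\beta<\omega_1: f_\alpha(\beta)=g(\beta)\}\subseteq m(b)$ for all $\alpha\in m(b)$. *)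

theory Defs
  imports Main
begin

definition omega1 :: "nat set set" where
  "omega1 = Field (cardSuc natLeq)"

definition omega2 :: "nat set set set" where
  "omega2 = Field (cardSuc (cardSuc natLeq))"

definition omega2_plus_omega :: "(nat set set + nat) set" where
  "omega2_plus_omega = Inl ` omega2 \<union> range Inr"

definition pairs :: "'a set \<Rightarrow> 'a set set" where
  "pairs d = {p. \<exists>x\<in>d. \<exists>y\<in>d. x \<noteq> y \<and> p = {x, y}}"

definition finsubs :: "'a set \<Rightarrow> 'a set set" where
  "finsubs X = {a. a \<subseteq> X \<and> finite a}"

definition monotone_fin :: "'a set \<Rightarrow> ('a set \<Rightarrow> 'a set) \<Rightarrow> bool" where
  "monotone_fin X m \<longleftrightarrow> (\<forall>a\<in>finsubs X. m a \<in> finsubs X \<and> a \<subseteq> m a)"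

definition Aset :: "('a set \<Rightarrow> 'b) \<Rightarrow> 'a set \<Rightarrow> 'a \<Rightarrow> 'a \<Rightarrow> 'a set" where
  "Aset c d x y = {z \<in> d - {x, y}. c {x, z} = c {y, z}}"

definition lrcorner :: bool where
  "lrcorner \<longleftrightarrow>
    (\<forall>f :: nat set \<Rightarrow> nat set \<Rightarrow> nat set.
      (\<forall>\<alpha>\<in>omega1. \<forall>\<beta>\<in>omega1. f \<alpha> \<beta> \<in> omega1) \<longrightarrow>
      (\<forall>F\<in>finsubs omega1. \<forall>m. monotone_fin omega1 m \<longrightarrow>
        (\<exists>g. (\<forall>\<beta>\<in>omega1. g \<beta> \<in> omega1) \<and> F \<inter> g ` omega1 = {} \<and>
          (\<forall>a\<in>finsubs omega1. \<exists>b\<in>finsubs omega1. a \<subseteq> b \<and>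
             (\<forall>\<alpha>\<in>m b. {\<beta>\<in>omega1. f \<alpha> \<beta> = g \<beta>} \<subseteq> m b)))))"

end

theory Submission
  imports Defs "HOL-Algebra.Free_Abelian_Groups"
begin


definition LRc :: "'c set \<Rightarrow> ('c \<Rightarrow> 'c \<Rightarrow> 'c) \<Rightarrow> 'c set \<Rightarrow> ('c set \<Rightarrow> 'c set) \<Rightarrow> ('c \<Rightarrow> 'c) \<Rightarrow> bool" where
  "LRc Om f F m g \<longleftrightarrow> (\<forall>\<beta>\<in>Om. g \<beta> \<in> Om) \<and> F \<inter> g ` Om = {} \<and>
          (\<forall>a\<in>finsubs Om. \<exists>b\<in>finsubs Om. a \<subseteq> b \<and>
             (\<forall>\<alpha>\<in>m b. {\<beta>\<in>Om. f \<alpha> \<beta> = g \<beta>} \<subseteq> m b))"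

locale core =
  fixes Om1 :: "'c set" and pr :: "'c \<times> 'c \<Rightarrow> 'c" and j0 :: 'c
    and P :: "'p set" and R :: "('p \<times> 'p) set" and emb :: "'p \<Rightarrow> 'p \<Rightarrow> 'c"
    and S :: "'s set" and pt :: "'s \<Rightarrow> nat \<Rightarrow> 'p" and st :: "'p \<Rightarrow> 's" and pos :: "'p \<Rightarrow> nat"
    and Bk :: "'s \<Rightarrow> ('p + nat) set \<times> (('p + nat) set \<Rightarrow> 'c) \<times> ('p + nat \<Rightarrow> 'p)"
  assumes LR: "\<And>f F m. (\<forall>\<alpha>\<in>Om1. \<forall>\<beta>\<in>Om1. f \<alpha> \<beta> \<in> Om1) \<Longrightarrow> F \<in> finsubs Om1 \<Longrightarrow>
        monotone_fin Om1 m \<Longrightarrow> \<exists>g. LRc Om1 f F m g"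
    and pr_inj: "inj_on pr (Om1 \<times> Om1)"
    and pr_in: "\<And>u v. u \<in> Om1 \<Longrightarrow> v \<in> Om1 \<Longrightarrow> pr (u, v) \<in> Om1"
    and j0: "j0 \<in> Om1"
    and wfR: "wf R" and R_P: "R \<subseteq> P \<times> P" and transR: "trans R"
    and totR: "\<And>x y. x \<in> P \<Longrightarrow> y \<in> P \<Longrightarrow> x \<noteq> y \<Longrightarrow> (x, y) \<in> R \<or> (y, x) \<in> R"
    and emb: "\<And>z. z \<in> P \<Longrightarrow> inj_on (emb z) {y. (y, z) \<in> R} \<and> emb z ` {y. (y, z) \<in> R} \<subseteq> Om1"
    and pt_P: "\<And>\<xi> k. \<xi> \<in> S \<Longrightarrow> pt \<xi> k \<in> P"
    and st_pt: "\<And>\<xi> k. \<xi> \<in> S \<Longrightarrow> st (pt \<xi> k) = \<xi>"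
    and pos_pt: "\<And>\<xi> k. \<xi> \<in> S \<Longrightarrow> pos (pt \<xi> k) = k"
    and pt_st: "\<And>z. z \<in> P \<Longrightarrow> st z \<in> S \<and> pt (st z) (pos z) = z"
    and pt_R: "\<And>\<xi> i k. \<xi> \<in> S \<Longrightarrow> (pt \<xi> i, pt \<xi> k) \<in> R \<longleftrightarrow> i < k"
    and convex: "\<And>\<xi> i j y. \<xi> \<in> S \<Longrightarrow> (pt \<xi> i, y) \<in> R \<Longrightarrow> (y, pt \<xi> j) \<in> R \<Longrightarrow> st y = \<xi>"
    and Bk: "\<And>d e s. finite d \<Longrightarrow> d \<subseteq> Inl ` P \<union> range Inr \<Longrightarrow>
        (\<forall>p. p \<notin> pairs d \<longrightarrow> e p = undefined) \<Longrightarrow> (\<forall>p\<in>pairs d. e p \<in> Om1) \<Longrightarrow>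
        (\<forall>x. x \<notin> d \<longrightarrow> s x = undefined) \<Longrightarrow> (\<forall>x\<in>d. s x \<in> P) \<Longrightarrow>
        \<exists>\<xi>\<in>S. Bk \<xi> = (d, e, s) \<and> (\<forall>\<alpha>. Inl \<alpha> \<in> d \<longrightarrow> (\<alpha>, pt \<xi> 0) \<in> R)"
    and P_ne: "P \<noteq> {}"
begin

definition Y :: "'p \<Rightarrow> 'p set" where "Y z = {y. (y, z) \<in> R}"
definition Yle :: "'p \<Rightarrow> 'p set" where "Yle z = insert z (Y z)"

lemma irrefl: "(x, x) \<notin> R"
  using wfR by (meson wf_not_refl)
lemma asym: "(x, y) \<in> R \<Longrightarrow> (y, x) \<notin> R"
  using wfR by (meson wf_not_sym)
lemma trR: "(x, y) \<in> R \<Longrightarrow> (y, z) \<in> R \<Longrightarrow> (x, z) \<in> R"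
  using transR by (meson transD)
lemma RP1: "(x, y) \<in> R \<Longrightarrow> x \<in> P" using R_P by auto
lemma RP2: "(x, y) \<in> R \<Longrightarrow> y \<in> P" using R_P by auto

lemma Y_P: "Y z \<subseteq> P" unfolding Y_def using R_P by auto
lemma Yle_P: "z \<in> P \<Longrightarrow> Yle z \<subseteq> P" unfolding Yle_def using Y_P by auto

definition maxR :: "'p set \<Rightarrow> 'p" where "maxR a = (THE y. y \<in> a \<and> a \<subseteq> Yle y)"

lemma max_exists: "finite a \<Longrightarrow> a \<noteq> {} \<Longrightarrow> a \<subseteq> P \<Longrightarrow> \<exists>y\<in>a. a \<subseteq> Yle y"
proof (induction a rule: finite_ne_induct)
  case (singleton x) then show ?case by (auto simp: Yle_def)
next
  case (insert x F)
  then obtain y where y: "y \<in> F" "F \<subseteq> Yle y" by auto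
  have "x \<in> P" "y \<in> P" using insert y by auto
  show ?case
  proof (cases "(y, x) \<in> R")
    case True
    then have "F \<subseteq> Yle x" using y(2) by (auto simp: Yle_def Y_def intro: trR)
    then show ?thesis by (auto simp: Yle_def)
  next
    case False
    then have "x \<in> Yle y" using totR[OF \<open>x \<in> P\<close> \<open>y \<in> P\<close>] by (auto simp: Yle_def Y_def)
    then show ?thesis using y by auto
  qed
qed

lemma max_unique: "y \<in> a \<Longrightarrow> a \<subseteq> Yle y \<Longrightarrow> y' \<in> a \<Longrightarrow> a \<subseteq> Yle y' \<Longrightarrow> y = y'"
proof -
  assume h: "y \<in> a" "a \<subseteq> Yle y" "y' \<in> a" "a \<subseteq> Yle y'"
  then have "y' = y \<or> (y', y) \<in> R" "y = y' \<or> (y, y') \<in> R" unfolding Yle_def Y_def by auto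
  then show ?thesis using asym by blast
qed

lemma maxR: "finite a \<Longrightarrow> a \<noteq> {} \<Longrightarrow> a \<subseteq> P \<Longrightarrow> maxR a \<in> a \<and> a \<subseteq> Yle (maxR a)"
proof -
  assume h: "finite a" "a \<noteq> {}" "a \<subseteq> P"
  obtain y where y: "y \<in> a" "a \<subseteq> Yle y" using max_exists[OF h] by blast
  have "maxR a = y" unfolding maxR_def
    by (rule the_equality) (use y max_unique in blast)+
  then show ?thesis using y by simp
qed

lemma maxR_eq: "y \<in> a \<Longrightarrow> a \<subseteq> Yle y \<Longrightarrow> maxR a = y"
  unfolding maxR_def by (rule the_equality) (use max_unique in blast)+

definition dd :: "'s \<Rightarrow> ('p + nat) set" where "dd \<xi> = fst (Bk \<xi>)"
definition ee :: "'s \<Rightarrow> ('p + nat) set \<Rightarrow> 'c" where "ee \<xi> = fst (snd (Bk \<xi>))"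
definition ss :: "'s \<Rightarrow> 'p + nat \<Rightarrow> 'p" where "ss \<xi> = snd (snd (Bk \<xi>))"
definition DD :: "'s \<Rightarrow> 'p set" where "DD \<xi> = {\<alpha>. Inl \<alpha> \<in> dd \<xi>}"
definition NN :: "'s \<Rightarrow> nat set" where "NN \<xi> = {k. Inr k \<in> dd \<xi>}"

definition valid :: "'s \<Rightarrow> bool" where
  "valid \<xi> \<longleftrightarrow> finite (dd \<xi>) \<and> (\<forall>\<alpha>\<in>DD \<xi>. (\<alpha>, pt \<xi> 0) \<in> R) \<and>
     (\<forall>k\<in>NN \<xi>. (\<forall>\<alpha>\<in>DD \<xi>. ee \<xi> {Inl \<alpha>, Inr k} \<in> Om1) \<and> (\<forall>i\<in>NN \<xi>. i \<noteq> k \<longrightarrow> ee \<xi> {Inr i, Inr k} \<in> Om1)) \<and>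
     (\<forall>k\<in>NN \<xi>. \<forall>\<alpha>\<in>DD \<xi>. \<forall>\<beta>\<in>DD \<xi>. \<alpha> \<noteq> \<beta> \<longrightarrow> ee \<xi> {Inl \<alpha>, Inr k} \<noteq> ee \<xi> {Inl \<beta>, Inr k}) \<and>
     (\<forall>k\<in>NN \<xi>. ss \<xi> (Inr k) \<in> P)"

definition act :: "'p \<Rightarrow> bool" where "act z \<longleftrightarrow> valid (st z) \<and> pos z \<in> NN (st z)"

definition Pz :: "'p \<Rightarrow> 'p set" where
  "Pz z = (if act z then DD (st z) \<union> pt (st z) ` {i \<in> NN (st z). i < pos z} else {})"

definition pre :: "'p \<Rightarrow> 'p \<Rightarrow> 'c" where
  "pre z y = (if y \<in> DD (st z) then ee (st z) {Inl y, Inr (pos z)} else ee (st z) {Inr (pos y), Inr (pos z)})"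

definition Bl :: "'p \<Rightarrow> 'p set" where
  "Bl \<beta> = (if valid (st \<beta>) then pt (st \<beta>) ` {k \<in> NN (st \<beta>). pos \<beta> < k} else {})"

definition dec :: "'c \<Rightarrow> 'c \<Rightarrow> 'c" where
  "dec v \<eta> = (if \<exists>u\<in>Om1. v = pr (u, \<eta>) then (SOME u. u \<in> Om1 \<and> v = pr (u, \<eta>)) else j0)"

type_synonym ('pp, 'cc) stt = "('pp \<Rightarrow> 'cc) \<times> ('pp set \<Rightarrow> 'pp set)"

definition ccH :: "('p \<Rightarrow> ('p, 'c) stt) \<Rightarrow> 'p \<Rightarrow> 'p \<Rightarrow> 'c" where
  "ccH h x y = (if (x, y) \<in> R then fst (h y) x else fst (h x) y)"

definition MH :: "('p \<Rightarrow> ('p, 'c) stt) \<Rightarrow> 'p set \<Rightarrow> 'p set" where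
  "MH h a = (if a \<noteq> {} \<and> maxR a \<in> a then snd (h (maxR a)) a else {})"

definition fH :: "('p \<Rightarrow> ('p, 'c) stt) \<Rightarrow> 'p \<Rightarrow> 'c \<Rightarrow> 'c \<Rightarrow> 'c" where
  "fH h z \<alpha> \<eta> = (if \<alpha> \<in> emb z ` Y z \<and> \<eta> \<in> emb z ` Y z \<and> \<alpha> \<noteq> \<eta>
     then dec (ccH h (inv_into (Y z) (emb z) \<alpha>) (inv_into (Y z) (emb z) \<eta>)) \<eta> else j0)"

definition FsH :: "'p \<Rightarrow> 'c set" where
  "FsH z = insert j0 ((\<lambda>v. fst (inv_into (Om1 \<times> Om1) pr v)) ` (pre z ` Pz z) \<inter> Om1)"

definition preim :: "'p \<Rightarrow> 'c set \<Rightarrow> 'p set" where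
  "preim z a = {y \<in> Y z. emb z y \<in> a}"

definition mX :: "('p \<Rightarrow> ('p, 'c) stt) \<Rightarrow> 'p \<Rightarrow> 'p set \<Rightarrow> 'p set" where
  "mX h z a0 = MH h (a0 \<union> (\<Union>(Bl ` a0) \<inter> Y z))"

definition mmH :: "('p \<Rightarrow> ('p, 'c) stt) \<Rightarrow> 'p \<Rightarrow> 'c set \<Rightarrow> 'c set" where
  "mmH h z a = a \<union> emb z ` mX h z (preim z a)"

definition gH :: "('p \<Rightarrow> ('p, 'c) stt) \<Rightarrow> 'p \<Rightarrow> 'c \<Rightarrow> 'c" where
  "gH h z = (SOME g. LRc Om1 (fH h z) (FsH z) (mmH h z) g)"

definition GH :: "('p \<Rightarrow> ('p, 'c) stt) \<Rightarrow> 'p \<Rightarrow> 'p \<Rightarrow> 'c" where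
  "GH h z y = (if y \<in> Pz z then pre z y else pr (gH h z (emb z y), emb z y))"

definition clos :: "('c \<Rightarrow> 'c \<Rightarrow> 'c) \<Rightarrow> ('c set \<Rightarrow> 'c set) \<Rightarrow> ('c \<Rightarrow> 'c) \<Rightarrow> 'c set \<Rightarrow> bool" where
  "clos f m g b \<longleftrightarrow> b \<in> finsubs Om1 \<and> (\<forall>\<alpha>\<in>m b. {\<beta>\<in>Om1. f \<alpha> \<beta> = g \<beta>} \<subseteq> m b)"

definition bH :: "('p \<Rightarrow> ('p, 'c) stt) \<Rightarrow> 'p \<Rightarrow> 'p set \<Rightarrow> 'p set" where
  "bH h z a0 = preim z (SOME b. emb z ` a0 \<subseteq> b \<and> clos (fH h z) (mmH h z) (gH h z) b)"

definition MnewH :: "('p \<Rightarrow> ('p, 'c) stt) \<Rightarrow> 'p \<Rightarrow> 'p set \<Rightarrow> 'p set" where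
  "MnewH h z a = insert z (mX h z (bH h z ((a - {z}) \<union> Pz z)))"

definition Fstep :: "('p \<Rightarrow> ('p, 'c) stt) \<Rightarrow> 'p \<Rightarrow> ('p, 'c) stt" where
  "Fstep h z = (GH h z, MnewH h z)"

definition ST :: "'p \<Rightarrow> ('p, 'c) stt" where "ST = wfrec R Fstep"

lemma ST_unfold: "z \<in> P \<Longrightarrow> ST z = Fstep ST z"
proof -
  assume zP: "z \<in> P"
  let ?h = "cut ST R z"
  have h: "\<And>y. y \<in> Y z \<Longrightarrow> ?h y = ST y" by (simp add: Y_def cut_apply)
  have cc: "\<And>x y. x \<in> Y z \<Longrightarrow> y \<in> Y z \<Longrightarrow> ccH ?h x y = ccH ST x y"
    unfolding ccH_def using h by simp
  have MHe: "\<And>a. a \<subseteq> Y z \<Longrightarrow> MH ?h a = MH ST a"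
    unfolding MH_def using h by auto
  have f: "fH ?h z = fH ST z"
  proof (intro ext)
    fix \<alpha> \<eta> show "fH ?h z \<alpha> \<eta> = fH ST z \<alpha> \<eta>"
    proof (cases "\<alpha> \<in> emb z ` Y z \<and> \<eta> \<in> emb z ` Y z \<and> \<alpha> \<noteq> \<eta>")
      case True
      then have "inv_into (Y z) (emb z) \<alpha> \<in> Y z" "inv_into (Y z) (emb z) \<eta> \<in> Y z"
        by (auto intro: inv_into_into)
      then show ?thesis unfolding fH_def if_P[OF True] using cc by metis
    next
      case False then show ?thesis by (simp only: fH_def if_not_P[OF False] if_False)
    qed
  qed
  have pY: "\<And>a. preim z a \<subseteq> Y z" by (auto simp: preim_def)
  have mXe: "\<And>a0. a0 \<subseteq> Y z \<Longrightarrow> mX ?h z a0 = mX ST z a0"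
  proof -
    fix a0 :: "'p set" assume "a0 \<subseteq> Y z"
    then have "a0 \<union> (\<Union>(Bl ` a0) \<inter> Y z) \<subseteq> Y z" by blast
    then show "mX ?h z a0 = mX ST z a0" unfolding mX_def by (rule MHe)
  qed
  have mm: "mmH ?h z = mmH ST z"
  proof (intro ext)
    fix a show "mmH ?h z a = mmH ST z a" unfolding mmH_def using mXe[OF pY] by simp
  qed
  have g: "gH ?h z = gH ST z" unfolding gH_def f mm ..
  have b: "bH ?h z = bH ST z" unfolding bH_def f mm g ..
  have "MnewH ?h z = MnewH ST z"
  proof (intro ext)
    fix a show "MnewH ?h z a = MnewH ST z a"
      unfolding MnewH_def b using mXe[OF pY] by (simp add: bH_def)
  qed
  moreover have "GH ?h z = GH ST z" unfolding GH_def g ..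
  ultimately have "Fstep ?h z = Fstep ST z" unfolding Fstep_def by simp
  moreover have "ST z = Fstep ?h z" unfolding ST_def by (rule wfrec[OF wfR])
  ultimately show ?thesis by simp
qed

definition G :: "'p \<Rightarrow> 'p \<Rightarrow> 'c" where "G z = fst (ST z)"
definition Mz :: "'p \<Rightarrow> 'p set \<Rightarrow> 'p set" where "Mz z = snd (ST z)"
definition M :: "'p set \<Rightarrow> 'p set" where "M = MH ST"
definition cc :: "'p \<Rightarrow> 'p \<Rightarrow> 'c" where "cc = ccH ST"
definition c :: "'p set \<Rightarrow> 'c" where
  "c p = cc (SOME x. x \<in> p) (SOME y. y \<in> p \<and> y \<noteq> (SOME x. x \<in> p))"

lemma G_eq: "z \<in> P \<Longrightarrow> G z = GH ST z"
  unfolding G_def using ST_unfold by (simp add: Fstep_def)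
lemma Mz_eq: "z \<in> P \<Longrightarrow> Mz z = MnewH ST z"
  unfolding Mz_def using ST_unfold by (simp add: Fstep_def)

lemma cc_lt: "(x, y) \<in> R \<Longrightarrow> cc x y = G y x"
  unfolding cc_def ccH_def G_def by simp
lemma cc_gt: "(y, x) \<in> R \<Longrightarrow> cc x y = G x y"
proof -
  assume h: "(y, x) \<in> R"
  then have "(x, y) \<notin> R" using asym by blast
  then show ?thesis unfolding cc_def ccH_def G_def by simp
qed
lemma cc_sym: "x \<in> P \<Longrightarrow> y \<in> P \<Longrightarrow> x \<noteq> y \<Longrightarrow> cc x y = cc y x"
proof -
  assume h: "x \<in> P" "y \<in> P" "x \<noteq> y"
  then consider "(x, y) \<in> R" | "(y, x) \<in> R" using totR by blast
  then show ?thesis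
  proof cases
    case 1 then show ?thesis using cc_lt[OF 1] cc_gt[OF 1] by simp
  next
    case 2 then show ?thesis using cc_lt[OF 2] cc_gt[OF 2] by simp
  qed
qed
lemma c_pair: "x \<in> P \<Longrightarrow> y \<in> P \<Longrightarrow> x \<noteq> y \<Longrightarrow> c {x, y} = cc x y"
proof -
  assume h: "x \<in> P" "y \<in> P" "x \<noteq> y"
  define u where "u = (SOME u. u \<in> {x, y})"
  have u: "u \<in> {x, y}" unfolding u_def by (rule someI[of _ x]) simp
  define v where "v = (SOME v. v \<in> {x, y} \<and> v \<noteq> u)"
  have ex: "\<exists>v. v \<in> {x, y} \<and> v \<noteq> u" using u h(3) by auto
  have v: "v \<in> {x, y} \<and> v \<noteq> u" unfolding v_def by (rule someI_ex[OF ex])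
  have "c {x, y} = cc u v" unfolding c_def u_def v_def ..
  also have "\<dots> = cc x y" using u v cc_sym h by auto
  finally show ?thesis .
qed

lemma pt_st_P: "z \<in> P \<Longrightarrow> pt (st z) (pos z) = z" using pt_st by blast
lemma st_S: "z \<in> P \<Longrightarrow> st z \<in> S" using pt_st by blast

lemma NN_fin: "valid \<xi> \<Longrightarrow> finite (NN \<xi>)"
proof -
  assume v: "valid \<xi>"
  have "NN \<xi> = Inr -` dd \<xi>" unfolding NN_def by auto
  then show ?thesis using v finite_vimageI[of "dd \<xi>" Inr] unfolding valid_def by simp
qed
lemma DD_fin: "valid \<xi> \<Longrightarrow> finite (DD \<xi>)"
proof -
  assume v: "valid \<xi>"
  have "DD \<xi> = Inl -` dd \<xi>" unfolding DD_def by auto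
  then show ?thesis using v finite_vimageI[of "dd \<xi>" Inl] unfolding valid_def by simp
qed

lemma Pz_fin: "finite (Pz z)"
  unfolding Pz_def act_def using NN_fin DD_fin by auto
lemma Bl_fin: "finite (Bl z)"
  unfolding Bl_def using NN_fin by auto

lemma pt0_le: "\<xi> \<in> S \<Longrightarrow> pt \<xi> 0 = pt \<xi> k \<or> (pt \<xi> 0, pt \<xi> k) \<in> R"
  using pt_R by (cases k) auto

lemma DD_R: "valid \<xi> \<Longrightarrow> \<xi> \<in> S \<Longrightarrow> y \<in> DD \<xi> \<Longrightarrow> (y, pt \<xi> k) \<in> R"
  using pt0_le[of \<xi> k] unfolding valid_def by (auto intro: trR)

lemma DD_st: "valid \<xi> \<Longrightarrow> \<xi> \<in> S \<Longrightarrow> y \<in> DD \<xi> \<Longrightarrow> st y \<noteq> \<xi>"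
proof
  assume h: "valid \<xi>" "\<xi> \<in> S" "y \<in> DD \<xi>" "st y = \<xi>"
  then have yP: "y \<in> P" using DD_R[of \<xi> y 0] RP1 by blast
  then have "y = pt \<xi> (pos y)" using pt_st_P h(4) by metis
  moreover have "(y, pt \<xi> 0) \<in> R" using h DD_R by blast
  ultimately show False using pt_R[OF h(2)] by (metis not_less0)
qed

lemma Pz_Y: "z \<in> P \<Longrightarrow> Pz z \<subseteq> Y z"
proof
  fix y assume z: "z \<in> P" and y: "y \<in> Pz z"
  then have a: "act z" unfolding Pz_def by (auto split: if_splits)
  have S: "st z \<in> S" using z st_S by blast
  have zz: "pt (st z) (pos z) = z" using z pt_st_P by blast
  from y a consider "y \<in> DD (st z)" | i where "i < pos z" "y = pt (st z) i" unfolding Pz_def by auto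
  then show "y \<in> Y z"
  proof cases
    case 1 then show ?thesis using DD_R[of "st z" y "pos z"] a S zz unfolding act_def Y_def by simp
  next
    case 2 then show ?thesis using pt_R[OF S, of i "pos z"] zz unfolding Y_def by simp
  qed
qed

lemma Bl_R: "w \<in> Bl \<beta> \<Longrightarrow> \<beta> \<in> P \<Longrightarrow> (\<beta>, w) \<in> R \<and> w \<in> P"
proof -
  assume w: "w \<in> Bl \<beta>" and b: "\<beta> \<in> P"
  then obtain k where k: "w = pt (st \<beta>) k" "pos \<beta> < k" unfolding Bl_def by (auto split: if_splits)
  have S: "st \<beta> \<in> S" using b st_S by blast
  show ?thesis using pt_R[OF S, of "pos \<beta>" k] k pt_st_P[OF b] pt_P[OF S] by simp
qed

lemma Bl_notle: "w \<in> Bl z \<Longrightarrow> z \<in> P \<Longrightarrow> w \<notin> Yle z"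
  using Bl_R irrefl asym unfolding Yle_def Y_def by blast

lemma finite_preim: "finite a \<Longrightarrow> z \<in> P \<Longrightarrow> finite (preim z a)"
proof -
  assume a: "finite a" and z: "z \<in> P"
  have "inj_on (emb z) (preim z a)" using emb[OF z] by (auto simp: preim_def inj_on_def Y_def)
  moreover have "emb z ` preim z a \<subseteq> a" by (auto simp: preim_def)
  ultimately show ?thesis using a by (meson finite_imageD finite_subset)
qed

lemma preim_Y: "preim z a \<subseteq> Y z" by (auto simp: preim_def)

lemma dec_in: "dec v \<eta> \<in> Om1"
proof (cases "\<exists>u\<in>Om1. v = pr (u, \<eta>)")
  case True
  then have "(SOME u. u \<in> Om1 \<and> v = pr (u, \<eta>)) \<in> Om1" by (metis (mono_tags, lifting) someI_ex)
  then show ?thesis unfolding dec_def using True by simp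
next
  case False then show ?thesis unfolding dec_def using j0 by simp
qed

lemma dec_pr: "u \<in> Om1 \<Longrightarrow> \<eta> \<in> Om1 \<Longrightarrow> dec (pr (u, \<eta>)) \<eta> = u"
proof -
  assume u: "u \<in> Om1" and e: "\<eta> \<in> Om1"
  have ex: "\<exists>u'. u' \<in> Om1 \<and> pr (u, \<eta>) = pr (u', \<eta>)" using u by blast
  define u' where "u' = (SOME u'. u' \<in> Om1 \<and> pr (u, \<eta>) = pr (u', \<eta>))"
  have "u' \<in> Om1 \<and> pr (u, \<eta>) = pr (u', \<eta>)" unfolding u'_def by (rule someI_ex[OF ex])
  then have "u' = u" using pr_inj u e unfolding inj_on_def by blast
  then show ?thesis unfolding dec_def u'_def using u by auto
qed

lemma f_in: "\<forall>\<alpha>\<in>Om1. \<forall>\<beta>\<in>Om1. fH h z \<alpha> \<beta> \<in> Om1"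
  unfolding fH_def using dec_in j0 by auto

lemma Fs_fin: "FsH z \<in> finsubs Om1"
  unfolding FsH_def finsubs_def using j0 Pz_fin by auto

definition LRok :: "'p \<Rightarrow> bool" where
  "LRok z \<longleftrightarrow> LRc Om1 (fH ST z) (FsH z) (mmH ST z) (gH ST z)"

lemma LRok_intro: "monotone_fin Om1 (mmH ST z) \<Longrightarrow> LRok z"
proof -
  assume m: "monotone_fin Om1 (mmH ST z)"
  have "\<exists>g. LRc Om1 (fH ST z) (FsH z) (mmH ST z) g" by (rule LR[OF f_in Fs_fin m])
  then show ?thesis unfolding LRok_def gH_def by (rule someI_ex)
qed

definition BC :: "'p \<Rightarrow> 'p set \<Rightarrow> bool" where
  "BC y A \<longleftrightarrow> (\<forall>\<beta>\<in>A. Bl \<beta> \<inter> Yle y \<subseteq> A)"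
definition Cl :: "'p \<Rightarrow> 'p set \<Rightarrow> bool" where
  "Cl y A \<longleftrightarrow> (\<forall>\<alpha>\<in>A. \<forall>\<beta>\<in>A. \<alpha> \<noteq> \<beta> \<longrightarrow> Aset c P \<alpha> \<beta> \<inter> Yle y \<subseteq> A)"

definition Mok :: "'p \<Rightarrow> bool" where
  "Mok y \<longleftrightarrow> (\<forall>a. finite a \<and> y \<in> a \<and> a \<subseteq> Yle y \<longrightarrow>
     finite (Mz y a) \<and> a \<subseteq> Mz y a \<and> Mz y a \<subseteq> Yle y \<and> BC y (Mz y a) \<and> Cl y (Mz y a))"

lemma MH_props: "z \<in> P \<Longrightarrow> (\<And>y. y \<in> Y z \<Longrightarrow> Mok y) \<Longrightarrow> finite b \<Longrightarrow> b \<subseteq> Y z \<Longrightarrow>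
   finite (MH ST b) \<and> b \<subseteq> MH ST b \<and> MH ST b \<subseteq> Y z"
proof -
  assume z: "z \<in> P" and IH: "\<And>y. y \<in> Y z \<Longrightarrow> Mok y" and b: "finite b" "b \<subseteq> Y z"
  show ?thesis
  proof (cases "b = {}")
    case True then show ?thesis by (simp add: MH_def)
  next
    case False
    have bP: "b \<subseteq> P" using b Y_P by blast
    define y where "y = maxR b"
    have y: "y \<in> b" "b \<subseteq> Yle y" using maxR[OF b(1) False bP] y_def by auto
    have yY: "y \<in> Y z" using y b by blast
    have e: "MH ST b = Mz y b" unfolding MH_def Mz_def y_def using y False y_def by simp
    have YY: "Yle y \<subseteq> Y z" using yY unfolding Yle_def Y_def by (auto intro: trR)
    have "finite (Mz y b) \<and> b \<subseteq> Mz y b \<and> Mz y b \<subseteq> Yle y"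
      using IH[OF yY] b(1) y unfolding Mok_def by blast
    then show ?thesis using YY e by auto
  qed
qed

lemma mono_mm: "z \<in> P \<Longrightarrow> (\<And>y. y \<in> Y z \<Longrightarrow> Mok y) \<Longrightarrow> monotone_fin Om1 (mmH ST z)"
  unfolding monotone_fin_def
proof
  fix a assume z: "z \<in> P" and IH: "\<And>y. y \<in> Y z \<Longrightarrow> Mok y" and a: "a \<in> finsubs Om1"
  let ?b = "preim z a \<union> (\<Union>(Bl ` preim z a) \<inter> Y z)"
  have fb: "finite ?b" using finite_preim[OF _ z] a Bl_fin by (auto simp: finsubs_def)
  have bY: "?b \<subseteq> Y z" using preim_Y by blast
  have "finite (MH ST ?b) \<and> MH ST ?b \<subseteq> Y z" using MH_props[OF z IH fb bY] by blast
  then have 1: "finite (mX ST z (preim z a)) \<and> mX ST z (preim z a) \<subseteq> Y z" unfolding mX_def by simp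
  have 2: "emb z ` Y z \<subseteq> Om1" using emb[OF z] unfolding Y_def by blast
  have "emb z ` mX ST z (preim z a) \<subseteq> Om1" using 1 2 by blast
  moreover have "finite (emb z ` mX ST z (preim z a))" using 1 by blast
  ultimately show "mmH ST z a \<in> finsubs Om1 \<and> a \<subseteq> mmH ST z a"
    using a unfolding mmH_def finsubs_def by auto
qed

lemma LRok_g: "LRok z \<Longrightarrow> \<beta> \<in> Om1 \<Longrightarrow> gH ST z \<beta> \<in> Om1"
  unfolding LRok_def LRc_def by blast
lemma LRok_F: "LRok z \<Longrightarrow> \<beta> \<in> Om1 \<Longrightarrow> gH ST z \<beta> \<notin> FsH z"
  unfolding LRok_def LRc_def by blast

lemma embY: "z \<in> P \<Longrightarrow> y \<in> Y z \<Longrightarrow> emb z y \<in> Om1"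
  using emb unfolding Y_def by blast
lemma emb_inj: "z \<in> P \<Longrightarrow> x \<in> Y z \<Longrightarrow> y \<in> Y z \<Longrightarrow> emb z x = emb z y \<Longrightarrow> x = y"
  using emb unfolding Y_def inj_on_def by blast

lemma G_P: "z \<in> P \<Longrightarrow> y \<in> Pz z \<Longrightarrow> G z y = pre z y"
  using G_eq by (simp add: GH_def)
lemma G_out: "z \<in> P \<Longrightarrow> y \<notin> Pz z \<Longrightarrow> G z y = pr (gH ST z (emb z y), emb z y)"
  using G_eq by (simp add: GH_def)

lemma Pz_cases: "y \<in> Pz z \<Longrightarrow> act z \<and> (y \<in> DD (st z) \<or> (\<exists>i. i \<in> NN (st z) \<and> i < pos z \<and> y = pt (st z) i))"
  unfolding Pz_def by (auto split: if_splits)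

lemma pre_in: "z \<in> P \<Longrightarrow> y \<in> Pz z \<Longrightarrow> pre z y \<in> Om1"
proof -
  assume z: "z \<in> P" and y: "y \<in> Pz z"
  have S: "st z \<in> S" using z st_S by blast
  from Pz_cases[OF y] have a: "act z" by blast
  then have v: "valid (st z)" and k: "pos z \<in> NN (st z)" unfolding act_def by auto
  from Pz_cases[OF y] consider "y \<in> DD (st z)" | i where "i \<in> NN (st z)" "i < pos z" "y = pt (st z) i" by blast
  then show ?thesis
  proof cases
    case 1 then show ?thesis using v k unfolding pre_def valid_def by auto
  next
    case 2
    have "y \<notin> DD (st z)" using DD_st[OF v S] 2 st_pt[OF S] by blast
    moreover have "pos y = i" using 2 pos_pt[OF S] by simp
    ultimately show ?thesis using v k 2 unfolding pre_def valid_def by auto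
  qed
qed

lemma G_in: "z \<in> P \<Longrightarrow> LRok z \<Longrightarrow> y \<in> Y z \<Longrightarrow> G z y \<in> Om1"
proof (cases "y \<in> Pz z")
  case True
  assume "z \<in> P" then show ?thesis using G_P pre_in True by simp
next
  case False
  assume z: "z \<in> P" and L: "LRok z" and y: "y \<in> Y z"
  then show ?thesis using G_out[OF z False] pr_in LRok_g[OF L] embY[OF z y] by simp
qed

lemma Fs_hit: "v \<in> pre z ` Pz z \<Longrightarrow> u \<in> Om1 \<Longrightarrow> \<eta> \<in> Om1 \<Longrightarrow> v = pr (u, \<eta>) \<Longrightarrow> u \<in> FsH z"
proof -
  assume v: "v \<in> pre z ` Pz z" and u: "u \<in> Om1" and e: "\<eta> \<in> Om1" and ve: "v = pr (u, \<eta>)"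
  have "inv_into (Om1 \<times> Om1) pr v = (u, \<eta>)" using ve inv_into_f_f[OF pr_inj, of "(u, \<eta>)"] u e by simp
  then show ?thesis unfolding FsH_def using v u by force
qed

lemma later:
  assumes ab: "(\<alpha>, \<beta>) \<in> R" and bw: "(\<beta>, w) \<in> R" and L: "LRok w" and eq: "cc \<alpha> w = cc \<beta> w"
  shows "w \<in> Bl \<beta>"
proof -
  have w: "w \<in> P" using bw RP2 by blast
  have aw: "(\<alpha>, w) \<in> R" using ab bw trR by blast
  have aY: "\<alpha> \<in> Y w" and bY: "\<beta> \<in> Y w" using aw bw unfolding Y_def by auto
  have ne: "\<alpha> \<noteq> \<beta>" using ab irrefl by blast
  have eqG: "G w \<alpha> = G w \<beta>" using eq cc_lt[OF aw] cc_lt[OF bw] by simp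
  have ea: "emb w \<alpha> \<in> Om1" and eb: "emb w \<beta> \<in> Om1" using embY[OF w] aY bY by auto
  have ga: "gH ST w (emb w \<alpha>) \<in> Om1" and gb: "gH ST w (emb w \<beta>) \<in> Om1" using LRok_g[OF L] ea eb by auto
  have "\<alpha> \<in> Pz w \<and> \<beta> \<in> Pz w"
  proof (rule ccontr)
    assume "\<not> (\<alpha> \<in> Pz w \<and> \<beta> \<in> Pz w)"
    then consider "\<alpha> \<notin> Pz w" "\<beta> \<notin> Pz w" | "\<alpha> \<in> Pz w" "\<beta> \<notin> Pz w" | "\<alpha> \<notin> Pz w" "\<beta> \<in> Pz w" by blast
    then show False
    proof cases
      case 1
      then have "pr (gH ST w (emb w \<alpha>), emb w \<alpha>) = pr (gH ST w (emb w \<beta>), emb w \<beta>)"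
        using eqG G_out[OF w] by simp
      then have "emb w \<alpha> = emb w \<beta>" using pr_inj ea eb ga gb unfolding inj_on_def by blast
      then show False using emb_inj[OF w aY bY] ne by blast
    next
      case 2
      then have "pre w \<alpha> = pr (gH ST w (emb w \<beta>), emb w \<beta>)" using eqG G_out[OF w] G_P[OF w] by simp
      then have "gH ST w (emb w \<beta>) \<in> FsH w" using Fs_hit[OF _ gb eb] 2 by blast
      then show False using LRok_F[OF L eb] by blast
    next
      case 3
      then have "pre w \<beta> = pr (gH ST w (emb w \<alpha>), emb w \<alpha>)" using eqG G_out[OF w] G_P[OF w] by simp
      then have "gH ST w (emb w \<alpha>) \<in> FsH w" using Fs_hit[OF _ ga ea] 3 by blast
      then show False using LRok_F[OF L ea] by blast
    qed
  qed
  then have aP: "\<alpha> \<in> Pz w" and bP: "\<beta> \<in> Pz w" by auto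
  have act: "act w" using Pz_cases[OF aP] by blast
  then have v: "valid (st w)" and k: "pos w \<in> NN (st w)" unfolding act_def by auto
  have S: "st w \<in> S" using w st_S by blast
  have ww: "pt (st w) (pos w) = w" using w pt_st_P by blast
  have pq: "pre w \<alpha> = pre w \<beta>" using eqG G_P[OF w] aP bP by simp
  show ?thesis
  proof (cases "\<beta> \<in> DD (st w)")
    case True
    show ?thesis
    proof (cases "\<alpha> \<in> DD (st w)")
      case True
      then have False using pq \<open>\<beta> \<in> DD (st w)\<close> v k ne unfolding pre_def valid_def by auto
      then show ?thesis ..
    next
      case False
      then obtain i where i: "i \<in> NN (st w)" "\<alpha> = pt (st w) i" using Pz_cases[OF aP] by blast
      have "(\<beta>, pt (st w) 0) \<in> R" using True v unfolding valid_def by blast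
      moreover have "pt (st w) 0 = \<alpha> \<or> (pt (st w) 0, \<alpha>) \<in> R" using pt0_le[OF S, of i] i by simp
      ultimately have "(\<beta>, \<alpha>) \<in> R" using trR by blast
      then show ?thesis using asym ab by blast
    qed
  next
    case False
    then obtain i where i: "i \<in> NN (st w)" "i < pos w" "\<beta> = pt (st w) i" using Pz_cases[OF bP] by blast
    have sb: "st \<beta> = st w" and pb: "pos \<beta> = i" using i st_pt[OF S] pos_pt[OF S] by auto
    show ?thesis unfolding Bl_def using sb pb i k ww v by force
  qed
qed

lemma agree:
  assumes z: "z \<in> P" and L: "LRok z" and b: "\<beta> \<in> Y z" and w: "w \<in> Y z" and ne: "w \<noteq> \<beta>"
    and nP: "w \<notin> Pz z" and eq: "cc \<beta> w = cc z w"
  shows "emb z w \<in> {\<eta>\<in>Om1. fH ST z (emb z \<beta>) \<eta> = gH ST z \<eta>}"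
proof -
  have ew: "emb z w \<in> Om1" and eb: "emb z \<beta> \<in> Om1" using embY[OF z] b w by auto
  have gw: "gH ST z (emb z w) \<in> Om1" using LRok_g[OF L ew] .
  have "cc z w = G z w" using cc_gt w unfolding Y_def by blast
  then have c1: "cc \<beta> w = pr (gH ST z (emb z w), emb z w)" using eq G_out[OF z nP] by simp
  have injz: "inj_on (emb z) (Y z)" using emb[OF z] unfolding Y_def by blast
  have neq: "emb z \<beta> \<noteq> emb z w" using emb_inj[OF z b w] ne by metis
  have i1: "inv_into (Y z) (emb z) (emb z \<beta>) = \<beta>" using inv_into_f_f[OF injz b] .
  have i2: "inv_into (Y z) (emb z) (emb z w) = w" using inv_into_f_f[OF injz w] .
  have "fH ST z (emb z \<beta>) (emb z w) = dec (cc \<beta> w) (emb z w)"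
    unfolding fH_def i1 i2 cc_def using neq b w by simp
  also have "\<dots> = gH ST z (emb z w)" using c1 dec_pr[OF gw ew] by simp
  finally show ?thesis using ew by simp
qed

lemma Aset_cc: "Aset c P \<alpha> \<beta> = {w \<in> P - {\<alpha>, \<beta>}. cc \<alpha> w = cc \<beta> w}" if "\<alpha> \<in> P" "\<beta> \<in> P"
  unfolding Aset_def using c_pair that by auto

lemma Bl_mono: "y \<in> Bl x \<Longrightarrow> x \<in> P \<Longrightarrow> Bl y \<subseteq> Bl x"
proof
  fix w assume y: "y \<in> Bl x" and x: "x \<in> P" and w: "w \<in> Bl y"
  have S: "st x \<in> S" using x st_S by blast
  from y obtain k where k: "valid (st x)" "k \<in> NN (st x)" "pos x < k" "y = pt (st x) k"
    unfolding Bl_def by (auto split: if_splits)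
  have sy: "st y = st x" "pos y = k" using k st_pt[OF S] pos_pt[OF S] by auto
  from w obtain l where "l \<in> NN (st y)" "pos y < l" "w = pt (st y) l" unfolding Bl_def by (auto split: if_splits)
  then show "w \<in> Bl x" unfolding Bl_def using sy k by auto
qed

lemma Bl_between:
  assumes w: "w \<in> Bl \<beta>" and b: "\<beta> \<in> P" and y: "y \<in> P" and by1: "\<beta> = y \<or> (\<beta>, y) \<in> R" and yw: "(y, w) \<in> R"
  shows "w \<in> Bl y"
proof -
  have S: "st \<beta> \<in> S" using b st_S by blast
  from w obtain k where k: "valid (st \<beta>)" "k \<in> NN (st \<beta>)" "pos \<beta> < k" "w = pt (st \<beta>) k"
    unfolding Bl_def by (auto split: if_splits)
  have bb: "pt (st \<beta>) (pos \<beta>) = \<beta>" using b pt_st_P by blast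
  have sy: "st y = st \<beta>"
  proof (cases "\<beta> = y")
    case True then show ?thesis by simp
  next
    case False then have "(\<beta>, y) \<in> R" using by1 by blast
    then show ?thesis using convex[OF S, of "pos \<beta>" y k] bb yw k by simp
  qed
  have yy: "pt (st \<beta>) (pos y) = y" using y pt_st_P sy by metis
  have "pos y < k" using pt_R[OF S, of "pos y" k] yw yy k by simp
  then show ?thesis unfolding Bl_def using sy k by auto
qed

lemma LRok_clos: "LRok z \<Longrightarrow> A \<in> finsubs Om1 \<Longrightarrow> \<exists>b. A \<subseteq> b \<and> clos (fH ST z) (mmH ST z) (gH ST z) b"
proof -
  assume L: "LRok z" and A: "A \<in> finsubs Om1"
  have "\<forall>a\<in>finsubs Om1. \<exists>b\<in>finsubs Om1. a \<subseteq> b \<and>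
             (\<forall>\<alpha>\<in>mmH ST z b. {\<beta>\<in>Om1. fH ST z \<alpha> \<beta> = gH ST z \<beta>} \<subseteq> mmH ST z b)"
    using L unfolding LRok_def LRc_def by (elim conjE)
  then obtain b where "b \<in> finsubs Om1" "A \<subseteq> b"
      "\<forall>\<alpha>\<in>mmH ST z b. {\<beta>\<in>Om1. fH ST z \<alpha> \<beta> = gH ST z \<beta>} \<subseteq> mmH ST z b"
    using A by meson
  then show ?thesis unfolding clos_def by blast
qed

lemma Mok_step:
  assumes z: "z \<in> P" and IH: "\<And>y. y \<in> Y z \<Longrightarrow> LRok y \<and> Mok y" and L: "LRok z"
  shows "Mok z"
  unfolding Mok_def
proof (intro allI impI)
  fix a assume a: "finite a \<and> z \<in> a \<and> a \<subseteq> Yle z"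
  define a0 where "a0 = (a - {z}) \<union> Pz z"
  have a0Y: "a0 \<subseteq> Y z" using a Pz_Y[OF z] unfolding a0_def Yle_def by auto
  have a0f: "finite a0" using a Pz_fin unfolding a0_def by auto
  have ea0: "emb z ` a0 \<in> finsubs Om1" using a0Y a0f embY[OF z] unfolding finsubs_def by auto
  define B where "B = (SOME b. emb z ` a0 \<subseteq> b \<and> clos (fH ST z) (mmH ST z) (gH ST z) b)"
  have B: "emb z ` a0 \<subseteq> B \<and> clos (fH ST z) (mmH ST z) (gH ST z) B"
    unfolding B_def by (rule someI_ex[OF LRok_clos[OF L ea0]])
  define b0 where "b0 = preim z B"
  have b0_eq: "bH ST z a0 = b0" unfolding bH_def b0_def B_def ..
  have Bf: "finite B" using B unfolding clos_def finsubs_def by blast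
  have b0f: "finite b0" unfolding b0_def using finite_preim[OF Bf z] .
  have b0Y: "b0 \<subseteq> Y z" unfolding b0_def by (rule preim_Y)
  have a0b0: "a0 \<subseteq> b0" using B a0Y unfolding b0_def preim_def by auto
  define b' where "b' = b0 \<union> (\<Union>(Bl ` b0) \<inter> Y z)"
  have b'f: "finite b'" unfolding b'_def using b0f Bl_fin by auto
  have b'Y: "b' \<subseteq> Y z" unfolding b'_def using b0Y by auto
  have b'P: "b' \<subseteq> P" using b'Y Y_P by blast
  have b'cl: "\<And>x w. x \<in> b' \<Longrightarrow> w \<in> Bl x \<Longrightarrow> w \<in> Y z \<Longrightarrow> w \<in> b'"
  proof -
    fix x w assume x: "x \<in> b'" and w: "w \<in> Bl x" and wY: "w \<in> Y z"
    show "w \<in> b'"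
    proof (cases "x \<in> b0")
      case True then show ?thesis using w wY unfolding b'_def by blast
    next
      case False
      then obtain x0 where x0: "x0 \<in> b0" "x \<in> Bl x0" using x unfolding b'_def by blast
      have "x0 \<in> P" using x0 b0Y Y_P by blast
      then have "w \<in> Bl x0" using Bl_mono[OF x0(2)] w by blast
      then show ?thesis using x0 wY unfolding b'_def by blast
    qed
  qed
  define Mb where "Mb = MH ST b'"
  have mXe: "mX ST z b0 = Mb" unfolding mX_def Mb_def b'_def ..
  have Mza: "Mz z a = insert z Mb"
    unfolding Mz_eq[OF z] MnewH_def a0_def[symmetric] b0_eq mXe ..
  have mmB: "mmH ST z B = B \<union> emb z ` Mb" unfolding mmH_def b0_def[symmetric] mXe ..
  have closB: "\<And>\<alpha>. \<alpha> \<in> mmH ST z B \<Longrightarrow> {\<beta>\<in>Om1. fH ST z \<alpha> \<beta> = gH ST z \<beta>} \<subseteq> mmH ST z B"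
    using B unfolding clos_def by blast
  have props: "finite Mb \<and> b' \<subseteq> Mb \<and> Mb \<subseteq> Y z"
    unfolding Mb_def using MH_props[OF z _ b'f b'Y] IH by blast
  have aM: "a \<subseteq> insert z Mb" using a0b0 props unfolding a0_def b'_def by auto
  have MY: "insert z Mb \<subseteq> Yle z" using props unfolding Yle_def by auto
  have MP: "insert z Mb \<subseteq> P" using MY Yle_P[OF z] by blast
  have Mbinfo: "Mb = {} \<or> (\<exists>y. y \<in> Y z \<and> y \<in> b' \<and> b' \<subseteq> Yle y \<and> Mb \<subseteq> Yle y \<and> BC y Mb \<and> Cl y Mb)"
  proof (cases "b' = {}")
    case True then show ?thesis unfolding Mb_def MH_def by simp
  next
    case False
    define y where "y = maxR b'"
    have y: "y \<in> b'" "b' \<subseteq> Yle y" using maxR[OF b'f False b'P] y_def by auto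
    have yY: "y \<in> Y z" using y b'Y by blast
    have e: "Mb = Mz y b'" unfolding Mb_def MH_def Mz_def y_def using y False y_def by simp
    have "Mb \<subseteq> Yle y \<and> BC y Mb \<and> Cl y Mb"
      using IH[OF yY] b'f y e unfolding Mok_def by blast
    then show ?thesis using y yY by blast
  qed
  have BCz: "BC z (insert z Mb)"
    unfolding BC_def
  proof
    fix \<beta> assume b: "\<beta> \<in> insert z Mb"
    show "Bl \<beta> \<inter> Yle z \<subseteq> insert z Mb"
    proof
      fix w assume w: "w \<in> Bl \<beta> \<inter> Yle z"
      show "w \<in> insert z Mb"
      proof (cases "\<beta> = z")
        case True then show ?thesis using w Bl_notle[OF _ z] by blast
      next
        case False
        then have bM: "\<beta> \<in> Mb" using b by blast
        then obtain y where y: "y \<in> Y z" "y \<in> b'" "b' \<subseteq> Yle y" "Mb \<subseteq> Yle y" "BC y Mb" using Mbinfo by blast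
        show ?thesis
        proof (cases "w = z \<or> w \<in> Yle y")
          case True then show ?thesis using y(5) bM w unfolding BC_def by blast
        next
          case False
          have wP: "w \<in> P" and yP: "y \<in> P" and bP: "\<beta> \<in> P" using w y MP bM Yle_P[OF z] Y_P by blast+
          have wY: "w \<in> Y z" using w False unfolding Yle_def by blast
          have yw: "(y, w) \<in> R" using totR[OF yP wP] False unfolding Yle_def Y_def by blast
          have by1: "\<beta> = y \<or> (\<beta>, y) \<in> R" using y(4) bM unfolding Yle_def Y_def by blast
          have "w \<in> Bl y" using Bl_between[OF _ bP yP by1 yw] w by blast
          then have "w \<in> b'" using b'cl[OF y(2) _ wY] by blast
          then show ?thesis using y(3) False by blast
        qed
      qed
    qed
  qed
  have zcase: "\<And>\<beta> w. \<beta> \<in> Mb \<Longrightarrow> w \<in> Yle z \<Longrightarrow> w \<noteq> z \<Longrightarrow> w \<noteq> \<beta> \<Longrightarrow> cc \<beta> w = cc z w \<Longrightarrow> w \<in> insert z Mb"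
  proof -
    fix \<beta> w assume bM: "\<beta> \<in> Mb" and wz: "w \<in> Yle z" "w \<noteq> z" and wb: "w \<noteq> \<beta>" and eq: "cc \<beta> w = cc z w"
    have wY: "w \<in> Y z" using wz unfolding Yle_def by blast
    have bY: "\<beta> \<in> Y z" using bM props by blast
    show "w \<in> insert z Mb"
    proof (cases "w \<in> Pz z")
      case True then show ?thesis using a0b0 props unfolding a0_def b'_def by blast
    next
      case False
      have ag: "emb z w \<in> {\<eta>\<in>Om1. fH ST z (emb z \<beta>) \<eta> = gH ST z \<eta>}"
        by (rule agree[OF z L bY wY wb False eq])
      have "emb z \<beta> \<in> mmH ST z B" using mmB bM by blast
      then have "emb z w \<in> B \<union> emb z ` Mb" using closB ag mmB by blast
      then show ?thesis
      proof
        assume "emb z w \<in> B" then have "w \<in> b0" using wY unfolding b0_def preim_def by blast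
        then show ?thesis using props unfolding b'_def by blast
      next
        assume "emb z w \<in> emb z ` Mb"
        then obtain x where x: "x \<in> Mb" "emb z w = emb z x" by blast
        have "x \<in> Y z" using x props by blast
        then have "w = x" using emb_inj[OF z wY] x by blast
        then show ?thesis using x by blast
      qed
    qed
  qed
  have lcase: "\<And>\<alpha> \<beta> w. \<alpha> \<in> Mb \<Longrightarrow> \<beta> \<in> Mb \<Longrightarrow> (\<alpha>, \<beta>) \<in> R \<Longrightarrow> w \<in> Yle z \<Longrightarrow> cc \<alpha> w = cc \<beta> w \<Longrightarrow> w \<in> P \<Longrightarrow>
      w \<noteq> \<alpha> \<Longrightarrow> w \<noteq> \<beta> \<Longrightarrow> w \<in> insert z Mb"
  proof -
    fix \<alpha> \<beta> w assume aM: "\<alpha> \<in> Mb" and bM: "\<beta> \<in> Mb" and ab: "(\<alpha>, \<beta>) \<in> R" and wz: "w \<in> Yle z"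
      and eq: "cc \<alpha> w = cc \<beta> w" and wP: "w \<in> P" and wa: "w \<noteq> \<alpha>" and wb: "w \<noteq> \<beta>"
    obtain y where y: "y \<in> Y z" "y \<in> b'" "b' \<subseteq> Yle y" "Mb \<subseteq> Yle y" "Cl y Mb" using Mbinfo aM by blast
    have aP: "\<alpha> \<in> P" and bP: "\<beta> \<in> P" using aM bM props Y_P by blast+
    have wA: "w \<in> Aset c P \<alpha> \<beta>" using Aset_cc[OF aP bP] eq wP wa wb by blast
    show "w \<in> insert z Mb"
    proof (cases "w \<in> Yle y")
      case True
      have "\<alpha> \<noteq> \<beta>" using ab irrefl by blast
      then show ?thesis using y(5) aM bM wA True unfolding Cl_def by blast
    next
      case False
      have yP: "y \<in> P" using y Y_P by blast
      have yw: "(y, w) \<in> R" using totR[OF yP wP] False unfolding Yle_def Y_def by blast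
      have by1: "\<beta> = y \<or> (\<beta>, y) \<in> R" using y(4) bM unfolding Yle_def Y_def by blast
      have bw: "(\<beta>, w) \<in> R" using by1 yw trR by blast
      have Lw: "LRok w"
      proof (cases "w = z")
        case True then show ?thesis using L by simp
      next
        case False then have "w \<in> Y z" using wz unfolding Yle_def by blast
        then show ?thesis using IH by blast
      qed
      have "w \<in> Bl \<beta>" by (rule later[OF ab bw Lw eq])
      then show ?thesis using BCz bM wz unfolding BC_def by blast
    qed
  qed
  have Clz: "Cl z (insert z Mb)"
    unfolding Cl_def
  proof (intro ballI impI subsetI)
    fix \<alpha> \<beta> w assume a: "\<alpha> \<in> insert z Mb" and b: "\<beta> \<in> insert z Mb" and ne: "\<alpha> \<noteq> \<beta>"
      and w: "w \<in> Aset c P \<alpha> \<beta> \<inter> Yle z"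
    have aP: "\<alpha> \<in> P" and bP: "\<beta> \<in> P" using a b MP by blast+
    have w2: "w \<in> P" "w \<noteq> \<alpha>" "w \<noteq> \<beta>" "cc \<alpha> w = cc \<beta> w" "w \<in> Yle z"
      using w Aset_cc[OF aP bP] by auto
    show "w \<in> insert z Mb"
    proof (cases "\<alpha> = z")
      case True
      then have "\<beta> \<in> Mb" using b ne by blast
      then show ?thesis using zcase w2 True by metis
    next
      case aZ: False
      show ?thesis
      proof (cases "\<beta> = z")
        case True
        then have "\<alpha> \<in> Mb" using a aZ by blast
        then show ?thesis using zcase w2 True by metis
      next
        case False
        then have aM: "\<alpha> \<in> Mb" and bM: "\<beta> \<in> Mb" using a b aZ by auto
        consider "(\<alpha>, \<beta>) \<in> R" | "(\<beta>, \<alpha>) \<in> R" using totR[OF aP bP ne] by blast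
        then show ?thesis
        proof cases
          case 1 then show ?thesis using lcase[OF aM bM 1] w2 by blast
        next
          case 2 then show ?thesis using lcase[OF bM aM 2] w2 by metis
        qed
      qed
    qed
  qed
  show "finite (Mz z a) \<and> a \<subseteq> Mz z a \<and> Mz z a \<subseteq> Yle z \<and> BC z (Mz z a) \<and> Cl z (Mz z a)"
    unfolding Mza using props aM MY BCz Clz by blast
qed

lemma all_ok: "z \<in> P \<Longrightarrow> LRok z \<and> Mok z"
proof (induction z rule: wf_induct[OF wfR])
  case (1 z)
  have IH: "\<And>y. y \<in> Y z \<Longrightarrow> LRok y \<and> Mok y" using 1 RP1 unfolding Y_def by blast
  have L: "LRok z" using LRok_intro[OF mono_mm[OF 1(2)]] IH by blast
  show ?case using L Mok_step[OF 1(2) IH L] by blast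
qed

definition mfin :: "'p set \<Rightarrow> 'p set" where "mfin a = MH ST (a \<union> \<Union>(Bl ` a))"
definition rr :: "'p \<Rightarrow> 'p" where "rr z = (if act z then ss (st z) (Inr (pos z)) else (SOME x. x \<in> P))"

lemma c_in: "x \<in> P \<Longrightarrow> y \<in> P \<Longrightarrow> x \<noteq> y \<Longrightarrow> c {x, y} \<in> Om1"
proof -
  assume x: "x \<in> P" and y: "y \<in> P" and ne: "x \<noteq> y"
  consider "(x, y) \<in> R" | "(y, x) \<in> R" using totR[OF x y ne] by blast
  then show ?thesis
  proof cases
    case 1 then show ?thesis using c_pair[OF x y ne] cc_lt G_in[OF y] all_ok[OF y] unfolding Y_def by simp
  next
    case 2 then show ?thesis using c_pair[OF x y ne] cc_gt G_in[OF x] all_ok[OF x] unfolding Y_def by simp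
  qed
qed

lemma mfin_info:
  assumes a: "a \<in> finsubs P"
  shows "(a = {} \<and> mfin a = {}) \<or> (\<exists>y. y \<in> P \<and> y \<in> a \<union> \<Union>(Bl ` a) \<and> a \<union> \<Union>(Bl ` a) \<subseteq> Yle y \<and>
      finite (mfin a) \<and> a \<union> \<Union>(Bl ` a) \<subseteq> mfin a \<and> mfin a \<subseteq> Yle y \<and> BC y (mfin a) \<and> Cl y (mfin a))"
proof -
  let ?a = "a \<union> \<Union>(Bl ` a)"
  have aP: "a \<subseteq> P" "finite a" using a unfolding finsubs_def by auto
  have fa: "finite ?a" using aP Bl_fin by auto
  have aP': "?a \<subseteq> P" using aP Bl_R by blast
  show ?thesis
  proof (cases "?a = {}")
    case True then show ?thesis unfolding mfin_def MH_def by auto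
  next
    case False
    define y where "y = maxR ?a"
    have y: "y \<in> ?a" "?a \<subseteq> Yle y" using maxR[OF fa False aP'] y_def by auto
    have yP: "y \<in> P" using y aP' by blast
    have e: "mfin a = Mz y ?a" unfolding mfin_def MH_def Mz_def y_def using y False y_def by simp
    have "Mok y" using all_ok[OF yP] by blast
    then have "finite (Mz y ?a) \<and> ?a \<subseteq> Mz y ?a \<and> Mz y ?a \<subseteq> Yle y \<and> BC y (Mz y ?a) \<and> Cl y (Mz y ?a)"
      unfolding Mok_def using fa y by blast
    then have "\<exists>y. y \<in> P \<and> y \<in> ?a \<and> ?a \<subseteq> Yle y \<and>
      finite (mfin a) \<and> ?a \<subseteq> mfin a \<and> mfin a \<subseteq> Yle y \<and> BC y (mfin a) \<and> Cl y (mfin a)"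
      using e yP y by metis
    then show ?thesis by (rule disjI2)
  qed
qed

lemma mono_fin: "monotone_fin P mfin"
  unfolding monotone_fin_def
proof
  fix a assume a: "a \<in> finsubs P"
  from mfin_info[OF a] show "mfin a \<in> finsubs P \<and> a \<subseteq> mfin a"
  proof
    assume h: "a = {} \<and> mfin a = {}"
    then have "mfin a = {}" "a = {}" by auto
    then show ?thesis unfolding finsubs_def by simp
  next
    assume "\<exists>y. y \<in> P \<and> y \<in> a \<union> \<Union>(Bl ` a) \<and> a \<union> \<Union>(Bl ` a) \<subseteq> Yle y \<and>
      finite (mfin a) \<and> a \<union> \<Union>(Bl ` a) \<subseteq> mfin a \<and> mfin a \<subseteq> Yle y \<and> BC y (mfin a) \<and> Cl y (mfin a)"
    then obtain y where "y \<in> P" "finite (mfin a)" "a \<union> \<Union>(Bl ` a) \<subseteq> mfin a" "mfin a \<subseteq> Yle y" by blast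
    then show ?thesis using Yle_P[of y] unfolding finsubs_def by blast
  qed
qed

lemma closure1:
  assumes a: "a \<in> finsubs P" and al: "\<alpha> \<in> mfin a" and be: "\<beta> \<in> mfin a" and ne: "\<alpha> \<noteq> \<beta>"
  shows "Aset c P \<alpha> \<beta> \<subseteq> mfin a"
proof
  fix w assume wA: "w \<in> Aset c P \<alpha> \<beta>"
  let ?a = "a \<union> \<Union>(Bl ` a)"
  from mfin_info[OF a] al obtain y where y: "y \<in> P" "y \<in> ?a" "?a \<subseteq> Yle y"
      "mfin a \<subseteq> Yle y" "Cl y (mfin a)" by blast
  show "w \<in> mfin a"
  proof (cases "w \<in> Yle y")
    case True then show ?thesis using y(5) al be ne wA unfolding Cl_def by blast
  next
    case False
    have aP: "\<alpha> \<in> P" and bP: "\<beta> \<in> P" using al be y(4) Yle_P[OF y(1)] by blast+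
    have w2: "w \<in> P" "w \<noteq> \<alpha>" "w \<noteq> \<beta>" "cc \<alpha> w = cc \<beta> w" using wA Aset_cc[OF aP bP] by auto
    have yw: "(y, w) \<in> R" using totR[OF y(1) w2(1)] False unfolding Yle_def Y_def by blast
    have Lw: "LRok w" using all_ok[OF w2(1)] by blast
    have gen: "\<And>x1 x2. x1 \<in> mfin a \<Longrightarrow> x2 \<in> mfin a \<Longrightarrow> (x1, x2) \<in> R \<Longrightarrow> cc x1 w = cc x2 w \<Longrightarrow> False"
    proof -
      fix x1 x2 assume x1: "x1 \<in> mfin a" and x2: "x2 \<in> mfin a" and r: "(x1, x2) \<in> R" and e: "cc x1 w = cc x2 w"
      have x2P: "x2 \<in> P" using x2 y(4) Yle_P[OF y(1)] by blast
      have by1: "x2 = y \<or> (x2, y) \<in> R" using y(4) x2 unfolding Yle_def Y_def by blast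
      have x2w: "(x2, w) \<in> R" using by1 yw trR by blast
      have "w \<in> Bl x2" by (rule later[OF r x2w Lw e])
      then have wy: "w \<in> Bl y" using Bl_between[OF _ x2P y(1) by1 yw] by blast
      have "w \<in> ?a"
      proof (cases "y \<in> a")
        case True then show ?thesis using wy by blast
      next
        case False
        then obtain x where x: "x \<in> a" "y \<in> Bl x" using y(2) by blast
        have "x \<in> P" using x a unfolding finsubs_def by blast
        then show ?thesis using Bl_mono[OF x(2)] wy x by blast
      qed
      then show False using y(3) False by blast
    qed
    consider "(\<alpha>, \<beta>) \<in> R" | "(\<beta>, \<alpha>) \<in> R" using totR[OF aP bP ne] by blast
    then show ?thesis
    proof cases
      case 1 then show ?thesis using gen[OF al be] w2 by blast
    next
      case 2 then show ?thesis using gen[OF be al] w2 by metis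
    qed
  qed
qed

lemma realize:
  assumes S: "\<xi> \<in> S" and v: "valid \<xi>" and k: "k \<in> NN \<xi>"
  shows "act (pt \<xi> k)"
    and "\<alpha> \<in> DD \<xi> \<Longrightarrow> G (pt \<xi> k) \<alpha> = ee \<xi> {Inl \<alpha>, Inr k}"
    and "i \<in> NN \<xi> \<Longrightarrow> i < k \<Longrightarrow> G (pt \<xi> k) (pt \<xi> i) = ee \<xi> {Inr i, Inr k}"
proof -
  have sp: "st (pt \<xi> k) = \<xi>" "pos (pt \<xi> k) = k" using st_pt[OF S] pos_pt[OF S] by auto
  show A: "act (pt \<xi> k)" unfolding act_def sp using v k by simp
  have P: "pt \<xi> k \<in> P" using pt_P[OF S] .
  show "\<alpha> \<in> DD \<xi> \<Longrightarrow> G (pt \<xi> k) \<alpha> = ee \<xi> {Inl \<alpha>, Inr k}"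
  proof -
    assume a: "\<alpha> \<in> DD \<xi>"
    have "\<alpha> \<in> Pz (pt \<xi> k)" unfolding Pz_def using A sp a by simp
    then show ?thesis using G_P[OF P] a sp unfolding pre_def by simp
  qed
  show "i \<in> NN \<xi> \<Longrightarrow> i < k \<Longrightarrow> G (pt \<xi> k) (pt \<xi> i) = ee \<xi> {Inr i, Inr k}"
  proof -
    assume i: "i \<in> NN \<xi>" "i < k"
    have "pt \<xi> i \<in> Pz (pt \<xi> k)" unfolding Pz_def using A sp i by auto
    moreover have "pt \<xi> i \<notin> DD \<xi>" using DD_st[OF v S] st_pt[OF S] by blast
    ultimately show ?thesis using G_P[OF P] sp pos_pt[OF S] unfolding pre_def by simp
  qed
qed

lemma pairs_mem: "x \<in> d \<Longrightarrow> y \<in> d \<Longrightarrow> x \<noteq> y \<Longrightarrow> {x, y} \<in> pairs d"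
  unfolding pairs_def by blast

lemma extension:
  fixes d :: "('p + nat) set" and e :: "('p + nat) set \<Rightarrow> 'c" and s :: "'p + nat \<Rightarrow> 'p"
  assumes fd: "finite d" and dP: "d \<subseteq> Inl ` P \<union> range Inr"
    and ein: "\<forall>p\<in>pairs d. e p \<in> Om1" and sin: "\<forall>\<alpha>\<in>d. s \<alpha> \<in> P"
    and ce: "\<forall>\<alpha> \<beta>. Inl \<alpha> \<in> d \<and> Inl \<beta> \<in> d \<and> \<alpha> \<noteq> \<beta> \<longrightarrow> c {\<alpha>, \<beta>} = e {Inl \<alpha>, Inl \<beta>}"
    and rs: "\<forall>\<alpha>. Inl \<alpha> \<in> d \<longrightarrow> rr \<alpha> = s (Inl \<alpha>)"
    and AA: "\<forall>\<alpha> \<beta>. Inl \<alpha> \<in> d \<and> Inl \<beta> \<in> d \<and> \<alpha> \<noteq> \<beta> \<longrightarrow> Aset e d (Inl \<alpha>) (Inl \<beta>) \<subseteq> Inl ` P"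
  shows "\<exists>\<iota>. inj_on \<iota> d \<and> (\<forall>\<alpha>\<in>d. \<iota> \<alpha> \<in> P) \<and> (\<forall>\<alpha>. Inl \<alpha> \<in> d \<longrightarrow> \<iota> (Inl \<alpha>) = \<alpha>) \<and>
            (\<forall>\<alpha>\<in>d. \<forall>\<beta>\<in>d. \<alpha> \<noteq> \<beta> \<longrightarrow> c {\<iota> \<alpha>, \<iota> \<beta>} = e {\<alpha>, \<beta>}) \<and> (\<forall>\<alpha>\<in>d. rr (\<iota> \<alpha>) = s \<alpha>)"
proof -
  define e' where "e' = (\<lambda>p. if p \<in> pairs d then e p else undefined)"
  define s' where "s' = (\<lambda>x. if x \<in> d then s x else undefined)"
  have "\<exists>\<xi>\<in>S. Bk \<xi> = (d, e', s') \<and> (\<forall>\<alpha>. Inl \<alpha> \<in> d \<longrightarrow> (\<alpha>, pt \<xi> 0) \<in> R)"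
    by (rule Bk[OF fd dP]) (auto simp: e'_def s'_def ein sin)
  then obtain \<xi> where S: "\<xi> \<in> S" and Bx: "Bk \<xi> = (d, e', s')" and below: "\<forall>\<alpha>. Inl \<alpha> \<in> d \<longrightarrow> (\<alpha>, pt \<xi> 0) \<in> R"
    by blast
  have dd: "dd \<xi> = d" "ee \<xi> = e'" "ss \<xi> = s'" unfolding dd_def ee_def ss_def Bx by auto
  have DDe: "DD \<xi> = {\<alpha>. Inl \<alpha> \<in> d}" and NNe: "NN \<xi> = {k. Inr k \<in> d}" unfolding DD_def NN_def dd by auto
  have v: "valid \<xi>"
    unfolding valid_def DDe NNe dd
  proof (intro conjI ballI impI)
    show "finite d" by (rule fd)
  next
    fix \<alpha> assume "\<alpha> \<in> {\<alpha>. Inl \<alpha> \<in> d}" then show "(\<alpha>, pt \<xi> 0) \<in> R" using below by blast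
  next
    fix k \<alpha> assume "k \<in> {k. Inr k \<in> d}" "\<alpha> \<in> {\<alpha>. Inl \<alpha> \<in> d}"
    then show "e' {Inl \<alpha>, Inr k} \<in> Om1" using pairs_mem[of "Inl \<alpha>" d "Inr k"] ein unfolding e'_def by auto
  next
    fix k i assume "k \<in> {k. Inr k \<in> d}" "i \<in> {k. Inr k \<in> d}" "i \<noteq> k"
    then show "e' {Inr i, Inr k} \<in> Om1" using pairs_mem[of "Inr i" d "Inr k"] ein unfolding e'_def by auto
  next
    fix k \<alpha> \<beta> assume k: "k \<in> {k. Inr k \<in> d}" and a: "\<alpha> \<in> {\<alpha>. Inl \<alpha> \<in> d}" and b: "\<beta> \<in> {\<alpha>. Inl \<alpha> \<in> d}"
      and ne: "\<alpha> \<noteq> \<beta>"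
    show "e' {Inl \<alpha>, Inr k} \<noteq> e' {Inl \<beta>, Inr k}"
    proof
      assume eq: "e' {Inl \<alpha>, Inr k} = e' {Inl \<beta>, Inr k}"
      have "{Inl \<alpha>, Inr k} \<in> pairs d" "{Inl \<beta>, Inr k} \<in> pairs d" using pairs_mem[of "Inl \<alpha>" d "Inr k"] pairs_mem[of "Inl \<beta>" d "Inr k"] a b k by auto
      then have "e {Inl \<alpha>, Inr k} = e {Inl \<beta>, Inr k}" using eq unfolding e'_def by simp
      then have "Inr k \<in> Aset e d (Inl \<alpha>) (Inl \<beta>)" unfolding Aset_def using k by auto
      then show False using AA a b ne by blast
    qed
  next
    fix k assume "k \<in> {k. Inr k \<in> d}" then show "s' (Inr k) \<in> P" using sin unfolding s'_def by simp
  qed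
  define \<iota> where "\<iota> = case_sum (\<lambda>\<alpha>. \<alpha>) (pt \<xi>)"
  have ptR: "\<And>\<alpha> k. Inl \<alpha> \<in> d \<Longrightarrow> (\<alpha>, pt \<xi> k) \<in> R"
    using DD_R[OF v S] DDe by blast
  have ne1: "\<And>\<alpha> k. Inl \<alpha> \<in> d \<Longrightarrow> \<alpha> \<noteq> pt \<xi> k" using ptR irrefl by blast
  have inP: "\<forall>x\<in>d. \<iota> x \<in> P"
  proof
    fix x assume x: "x \<in> d"
    show "\<iota> x \<in> P"
    proof (cases x)
      case (Inl \<alpha>) then show ?thesis using x dP unfolding \<iota>_def by auto
    next
      case (Inr k) then show ?thesis unfolding \<iota>_def using pt_P[OF S] by simp
    qed
  qed
  have inj: "inj_on \<iota> d"
  proof (rule inj_onI)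
    fix x y assume x: "x \<in> d" and y: "y \<in> d" and eq: "\<iota> x = \<iota> y"
    show "x = y"
    proof (cases x; cases y)
      fix a b assume "x = Inl a" "y = Inl b" then show ?thesis using eq unfolding \<iota>_def by simp
    next
      fix a k assume h: "x = Inl a" "y = Inr k"
      then have "a = pt \<xi> k" using eq unfolding \<iota>_def by simp
      then show ?thesis using ne1[of a k] x h by blast
    next
      fix k a assume h: "x = Inr k" "y = Inl a"
      then have "a = pt \<xi> k" using eq unfolding \<iota>_def by simp
      then show ?thesis using ne1[of a k] y h by blast
    next
      fix k l assume h: "x = Inr k" "y = Inr l"
      then have "pt \<xi> k = pt \<xi> l" using eq unfolding \<iota>_def by simp
      then have "k = l" using pos_pt[OF S, of k] pos_pt[OF S, of l] by metis
      then show ?thesis using h by simp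
    qed
  qed
  have mixed: "\<And>\<alpha> k. Inl \<alpha> \<in> d \<Longrightarrow> Inr k \<in> d \<Longrightarrow> c {\<alpha>, pt \<xi> k} = e {Inl \<alpha>, Inr k}"
  proof -
    fix \<alpha> k assume a: "Inl \<alpha> \<in> d" and k: "Inr k \<in> d"
    have aP: "\<alpha> \<in> P" using a dP by auto
    have "c {\<alpha>, pt \<xi> k} = cc \<alpha> (pt \<xi> k)" using c_pair[OF aP pt_P[OF S] ne1[OF a]] .
    also have "\<dots> = G (pt \<xi> k) \<alpha>" using cc_lt ptR[OF a] by blast
    also have "\<dots> = ee \<xi> {Inl \<alpha>, Inr k}" using realize(2)[OF S v, of k \<alpha>] NNe DDe a k by simp
    also have "\<dots> = e {Inl \<alpha>, Inr k}" unfolding dd e'_def using pairs_mem[OF a k] by simp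
    finally show "c {\<alpha>, pt \<xi> k} = e {Inl \<alpha>, Inr k}" .
  qed
  have inner: "\<And>i k. Inr i \<in> d \<Longrightarrow> Inr k \<in> d \<Longrightarrow> i < k \<Longrightarrow> c {pt \<xi> i, pt \<xi> k} = e {Inr i, Inr k}"
  proof -
    fix i k assume i: "Inr i \<in> d" and k: "Inr k \<in> d" and ik: "i < k"
    have ne: "pt \<xi> i \<noteq> pt \<xi> k"
    proof
      assume "pt \<xi> i = pt \<xi> k"
      then have "pos (pt \<xi> i) = pos (pt \<xi> k)" by simp
      then show False using ik pos_pt[OF S, of i] pos_pt[OF S, of k] by simp
    qed
    have "c {pt \<xi> i, pt \<xi> k} = cc (pt \<xi> i) (pt \<xi> k)" using c_pair[OF pt_P[OF S] pt_P[OF S] ne] .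
    also have "\<dots> = G (pt \<xi> k) (pt \<xi> i)" using cc_lt pt_R[OF S] ik by blast
    also have "\<dots> = ee \<xi> {Inr i, Inr k}" using realize(3)[OF S v, of k i] NNe i k ik by simp
    also have "\<dots> = e {Inr i, Inr k}" unfolding dd e'_def using pairs_mem[OF i k] ik by simp
    finally show "c {pt \<xi> i, pt \<xi> k} = e {Inr i, Inr k}" .
  qed
  have colors: "\<forall>x\<in>d. \<forall>y\<in>d. x \<noteq> y \<longrightarrow> c {\<iota> x, \<iota> y} = e {x, y}"
  proof (intro ballI impI)
    fix x y assume x: "x \<in> d" and y: "y \<in> d" and ne: "x \<noteq> y"
    show "c {\<iota> x, \<iota> y} = e {x, y}"
    proof (cases x; cases y)
      fix a b assume "x = Inl a" "y = Inl b" then show ?thesis using ce x y ne unfolding \<iota>_def by auto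
    next
      fix a k assume "x = Inl a" "y = Inr k" then show ?thesis using mixed x y unfolding \<iota>_def by simp
    next
      fix k a assume h: "x = Inr k" "y = Inl a"
      then have "c {\<iota> x, \<iota> y} = c {a, pt \<xi> k}" unfolding \<iota>_def by (simp add: insert_commute)
      also have "\<dots> = e {Inl a, Inr k}" using mixed x y h by simp
      finally show ?thesis using h by (simp add: insert_commute)
    next
      fix k l assume h: "x = Inr k" "y = Inr l"
      then have "k \<noteq> l" using ne by simp
      then consider "k < l" | "l < k" by linarith
      then show ?thesis
      proof cases
        case 1 then show ?thesis using inner x y h unfolding \<iota>_def by simp
      next
        case 2
        have "c {\<iota> x, \<iota> y} = c {pt \<xi> l, pt \<xi> k}" using h unfolding \<iota>_def by (simp add: insert_commute)
        also have "\<dots> = e {Inr l, Inr k}" using inner x y h 2 by simp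
        finally show ?thesis using h by (simp add: insert_commute)
      qed
    qed
  qed
  have rvals: "\<forall>x\<in>d. rr (\<iota> x) = s x"
  proof
    fix x assume x: "x \<in> d"
    show "rr (\<iota> x) = s x"
    proof (cases x)
      case (Inl \<alpha>) then show ?thesis using rs x unfolding \<iota>_def by simp
    next
      case (Inr k)
      have kN: "k \<in> NN \<xi>" using x Inr NNe by simp
      have "rr (pt \<xi> k) = ss \<xi> (Inr k)"
        unfolding rr_def using realize(1)[OF S v kN] st_pt[OF S] pos_pt[OF S] by simp
      then show ?thesis using Inr x unfolding \<iota>_def dd s'_def by simp
    qed
  qed
  show ?thesis
    apply (rule exI[of _ \<iota>])
    using inj inP colors rvals unfolding \<iota>_def by auto
qed

lemma extension2: "\<forall>(d::('p + nat) set) e s. finite d \<and> d \<subseteq> Inl ` P \<union> range Inr \<and>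
       (\<forall>p\<in>pairs d. e p \<in> Om1) \<and>
       (\<forall>\<alpha>\<in>d. s \<alpha> \<in> P) \<and>
       (\<forall>\<alpha> \<beta>. Inl \<alpha> \<in> d \<and> Inl \<beta> \<in> d \<and> \<alpha> \<noteq> \<beta> \<longrightarrow> c {\<alpha>, \<beta>} = e {Inl \<alpha>, Inl \<beta>}) \<and>
       (\<forall>\<alpha>. Inl \<alpha> \<in> d \<longrightarrow> rr \<alpha> = s (Inl \<alpha>)) \<and>
       (\<forall>\<alpha> \<beta>. Inl \<alpha> \<in> d \<and> Inl \<beta> \<in> d \<and> \<alpha> \<noteq> \<beta> \<longrightarrow> Aset e d (Inl \<alpha>) (Inl \<beta>) \<subseteq> Inl ` P)
     \<longrightarrow> (\<exists>\<iota>. inj_on \<iota> d \<and> (\<forall>\<alpha>\<in>d. \<iota> \<alpha> \<in> P) \<and>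
            (\<forall>\<alpha>. Inl \<alpha> \<in> d \<longrightarrow> \<iota> (Inl \<alpha>) = \<alpha>) \<and>
            (\<forall>\<alpha>\<in>d. \<forall>\<beta>\<in>d. \<alpha> \<noteq> \<beta> \<longrightarrow> c {\<iota> \<alpha>, \<iota> \<beta>} = e {\<alpha>, \<beta>}) \<and>
            (\<forall>\<alpha>\<in>d. rr (\<iota> \<alpha>) = s \<alpha>))"
proof (intro allI impI)
  fix d :: "('p + nat) set" and e :: "('p + nat) set \<Rightarrow> 'c" and s :: "'p + nat \<Rightarrow> 'p"
  assume h: "finite d \<and> d \<subseteq> Inl ` P \<union> range Inr \<and>
       (\<forall>p\<in>pairs d. e p \<in> Om1) \<and>
       (\<forall>\<alpha>\<in>d. s \<alpha> \<in> P) \<and>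
       (\<forall>\<alpha> \<beta>. Inl \<alpha> \<in> d \<and> Inl \<beta> \<in> d \<and> \<alpha> \<noteq> \<beta> \<longrightarrow> c {\<alpha>, \<beta>} = e {Inl \<alpha>, Inl \<beta>}) \<and>
       (\<forall>\<alpha>. Inl \<alpha> \<in> d \<longrightarrow> rr \<alpha> = s (Inl \<alpha>)) \<and>
       (\<forall>\<alpha> \<beta>. Inl \<alpha> \<in> d \<and> Inl \<beta> \<in> d \<and> \<alpha> \<noteq> \<beta> \<longrightarrow> Aset e d (Inl \<alpha>) (Inl \<beta>) \<subseteq> Inl ` P)"
  show "\<exists>\<iota>. inj_on \<iota> d \<and> (\<forall>\<alpha>\<in>d. \<iota> \<alpha> \<in> P) \<and>
            (\<forall>\<alpha>. Inl \<alpha> \<in> d \<longrightarrow> \<iota> (Inl \<alpha>) = \<alpha>) \<and>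
            (\<forall>\<alpha>\<in>d. \<forall>\<beta>\<in>d. \<alpha> \<noteq> \<beta> \<longrightarrow> c {\<iota> \<alpha>, \<iota> \<beta>} = e {\<alpha>, \<beta>}) \<and>
            (\<forall>\<alpha>\<in>d. rr (\<iota> \<alpha>) = s \<alpha>)"
    using h by (elim conjE) (rule extension[of d e s], assumption+)
qed

lemma closure2: "\<forall>a\<in>finsubs P. \<forall>\<alpha>\<in>mfin a. \<forall>\<beta>\<in>mfin a. \<alpha> \<noteq> \<beta> \<longrightarrow> Aset c P \<alpha> \<beta> \<subseteq> mfin a"
  by (intro ballI impI) (rule closure1)

lemma rr_in: "\<forall>\<alpha>\<in>P. rr \<alpha> \<in> P"
proof
  fix \<alpha> assume a: "\<alpha> \<in> P"
  show "rr \<alpha> \<in> P"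
  proof (cases "act \<alpha>")
    case True
    then have "valid (st \<alpha>)" "pos \<alpha> \<in> NN (st \<alpha>)" unfolding act_def by auto
    then have "ss (st \<alpha>) (Inr (pos \<alpha>)) \<in> P" unfolding valid_def by blast
    then show ?thesis unfolding rr_def using True by simp
  next
    case False then show ?thesis unfolding rr_def using a someI[of "\<lambda>x. x \<in> P" \<alpha>] by simp
  qed
qed

lemma c_in2: "\<forall>p\<in>pairs P. c p \<in> Om1"
proof
  fix p assume "p \<in> pairs P"
  then obtain x y where "x \<in> P" "y \<in> P" "x \<noteq> y" "p = {x, y}" unfolding pairs_def by blast
  then show "c p \<in> Om1" using c_in by blast
qed

theorem core_main:
  "\<exists>(c :: 'p set \<Rightarrow> 'c) m (r :: 'p \<Rightarrow> 'p).
    (\<forall>p\<in>pairs P. c p \<in> Om1) \<and>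
    monotone_fin P m \<and>
    (\<forall>\<alpha>\<in>P. r \<alpha> \<in> P) \<and>
    (\<forall>a\<in>finsubs P. \<forall>\<alpha>\<in>m a. \<forall>\<beta>\<in>m a. \<alpha> \<noteq> \<beta> \<longrightarrow> Aset c P \<alpha> \<beta> \<subseteq> m a) \<and>
    (\<forall>(d::('p + nat) set) e s. finite d \<and> d \<subseteq> Inl ` P \<union> range Inr \<and>
       (\<forall>p\<in>pairs d. e p \<in> Om1) \<and>
       (\<forall>\<alpha>\<in>d. s \<alpha> \<in> P) \<and>
       (\<forall>\<alpha> \<beta>. Inl \<alpha> \<in> d \<and> Inl \<beta> \<in> d \<and> \<alpha> \<noteq> \<beta> \<longrightarrow> c {\<alpha>, \<beta>} = e {Inl \<alpha>, Inl \<beta>}) \<and>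
       (\<forall>\<alpha>. Inl \<alpha> \<in> d \<longrightarrow> r \<alpha> = s (Inl \<alpha>)) \<and>
       (\<forall>\<alpha> \<beta>. Inl \<alpha> \<in> d \<and> Inl \<beta> \<in> d \<and> \<alpha> \<noteq> \<beta> \<longrightarrow> Aset e d (Inl \<alpha>) (Inl \<beta>) \<subseteq> Inl ` P)
     \<longrightarrow> (\<exists>\<iota>. inj_on \<iota> d \<and> (\<forall>\<alpha>\<in>d. \<iota> \<alpha> \<in> P) \<and>
            (\<forall>\<alpha>. Inl \<alpha> \<in> d \<longrightarrow> \<iota> (Inl \<alpha>) = \<alpha>) \<and>
            (\<forall>\<alpha>\<in>d. \<forall>\<beta>\<in>d. \<alpha> \<noteq> \<beta> \<longrightarrow> c {\<iota> \<alpha>, \<iota> \<beta>} = e {\<alpha>, \<beta>}) \<and>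
            (\<forall>\<alpha>\<in>d. r (\<iota> \<alpha>) = s \<alpha>)))"
  apply (rule exI[of _ c])
  apply (rule exI[of _ mfin])
  apply (rule exI[of _ rr])
  apply (intro conjI)
      apply (rule c_in2)
     apply (rule mono_fin)
    apply (rule rr_in)
   apply (rule closure2)
  apply (rule extension2)
  done

end



abbreviation "W1 \<equiv> cardSuc natLeq"
abbreviation "W2 \<equiv> cardSuc W1"

lemma W1_co: "Card_order W1" by (rule cardSuc_Card_order[OF natLeq_Card_order])
lemma W2_co: "Card_order W2" by (rule cardSuc_Card_order[OF W1_co])

lemma om1_inf: "infinite omega1"
  unfolding omega1_def using cardSuc_finite[OF natLeq_Card_order] Field_natLeq by simp
lemma om2_inf: "infinite omega2"
  unfolding omega2_def using cardSuc_finite[OF W1_co] om1_inf unfolding omega1_def by simp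
lemma om1_iso: "|omega1| =o W1" unfolding omega1_def by (rule card_of_Field_ordIso[OF W1_co])
lemma om2_iso: "|omega2| =o W2" unfolding omega2_def by (rule card_of_Field_ordIso[OF W2_co])

lemma om1_less: "|omega1| <o |omega2|"
proof -
  have "W1 <o W2" by (rule cardSuc_greater[OF W1_co])
  then have "|omega1| <o W2" by (rule ordIso_ordLess_trans[OF om1_iso])
  then show ?thesis by (rule ordLess_ordIso_trans[OF _ ordIso_symmetric[OF om2_iso]])
qed

lemma nat_small: "|UNIV :: nat set| \<le>o |omega1|" by (rule infinite_iff_card_of_nat[THEN iffD1, OF om1_inf])
lemma fin_small: "finite A \<Longrightarrow> |A| \<le>o |omega1|"
  by (rule ordLess_imp_ordLeq[OF finite_ordLess_infinite2[OF _ om1_inf]])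
lemma om12: "|omega1| \<le>o |omega2|" by (rule ordLess_imp_ordLeq[OF om1_less])

lemma under_small: "\<xi> \<in> omega2 \<Longrightarrow> |under W2 \<xi>| \<le>o |omega1|"
proof -
  assume x: "\<xi> \<in> omega2"
  have "|underS W2 \<xi>| <o W2" using card_of_underS[OF W2_co] x unfolding omega2_def by blast
  then have "|underS W2 \<xi>| \<le>o W1"
    by (rule cardSuc_ordLeq_ordLess[OF W1_co card_of_Card_order, THEN iffD1])
  then have a: "|underS W2 \<xi>| \<le>o |omega1|" by (rule ordLeq_ordIso_trans[OF _ ordIso_symmetric[OF om1_iso]])
  have b: "|{\<xi>}| \<le>o |omega1|" by (rule fin_small) simp
  have "under W2 \<xi> \<subseteq> underS W2 \<xi> \<union> {\<xi>}" unfolding under_def underS_def by auto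
  then have c: "|under W2 \<xi>| \<le>o |underS W2 \<xi> \<union> {\<xi>}|" by (rule card_of_mono1)
  have "|underS W2 \<xi> \<union> {\<xi>}| \<le>o |omega1|"
    by (rule card_of_Un_ordLeq_infinite[OF om1_inf a b])
  then show ?thesis by (rule ordLeq_transitive[OF c])
qed

lemma nat_small2: "|UNIV :: nat set| \<le>o |omega2|" by (rule infinite_iff_card_of_nat[THEN iffD1, OF om2_inf])

lemma psi_ex: "\<exists>f. bij_betw f omega2 (omega2 \<times> (UNIV :: nat set))"
proof -
  have "|omega2 \<times> (UNIV :: nat set)| =o |omega2|"
    using card_of_Times_infinite[OF om2_inf _ nat_small2] by simp
  then have "|omega2| =o |omega2 \<times> (UNIV :: nat set)|" by (rule ordIso_symmetric)
  then show ?thesis using card_of_ordIso by blast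
qed

definition psi :: "nat set set \<Rightarrow> nat set set \<times> nat" where
  "psi = (SOME f. bij_betw f omega2 (omega2 \<times> (UNIV :: nat set)))"
lemma psi_bij: "bij_betw psi omega2 (omega2 \<times> (UNIV :: nat set))"
  unfolding psi_def by (rule someI_ex[OF psi_ex])

definition Lx :: "((nat set set \<times> nat) \<times> (nat set set \<times> nat)) set" where
  "Lx = (W2 - Id) <*lex*> less_than"
definition RR :: "(nat set set \<times> nat set set) set" where
  "RR = {(x, y). x \<in> omega2 \<and> y \<in> omega2 \<and> (psi x, psi y) \<in> Lx}"

lemma W2_wo: "Well_order W2" using W2_co unfolding card_order_on_def by blast
lemma W2_wf: "wf (W2 - Id)" using W2_wo unfolding well_order_on_def by blast
lemma W2_lin: "linear_order_on omega2 W2" using W2_wo unfolding well_order_on_def omega2_def by blast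
lemma W2_trans: "trans W2" using W2_lin unfolding linear_order_on_def partial_order_on_def preorder_on_def by blast
lemma W2_antisym: "antisym W2" using W2_lin unfolding linear_order_on_def partial_order_on_def by blast
lemma W2_total: "\<xi> \<in> omega2 \<Longrightarrow> \<zeta> \<in> omega2 \<Longrightarrow> \<xi> \<noteq> \<zeta> \<Longrightarrow> (\<xi>, \<zeta>) \<in> W2 \<or> (\<zeta>, \<xi>) \<in> W2"
  using W2_lin unfolding linear_order_on_def total_on_def by blast
lemma W2_field: "(\<xi>, \<zeta>) \<in> W2 \<Longrightarrow> \<xi> \<in> omega2 \<and> \<zeta> \<in> omega2"
  unfolding omega2_def by (auto intro: FieldI1 FieldI2)

lemma W2s_trans: "trans (W2 - Id)"
proof (rule transI)
  fix x y z assume a: "(x, y) \<in> W2 - Id" and b: "(y, z) \<in> W2 - Id"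
  have "(x, z) \<in> W2" using a b W2_trans unfolding trans_def by blast
  moreover have "x \<noteq> z"
  proof
    assume "x = z" then show False using a b W2_antisym unfolding antisym_def by blast
  qed
  ultimately show "(x, z) \<in> W2 - Id" by simp
qed

lemma W2s_asym: "(x, y) \<in> W2 - Id \<Longrightarrow> (y, x) \<notin> W2 - Id"
  using W2_antisym unfolding antisym_def by blast

lemma Lx_iff: "((a, i), (b, k)) \<in> Lx \<longleftrightarrow> (a, b) \<in> W2 - Id \<or> (a = b \<and> i < k)"
  unfolding Lx_def by (simp add: less_than_iff)

lemma psi_in: "x \<in> omega2 \<Longrightarrow> psi x \<in> omega2 \<times> UNIV"
  using psi_bij unfolding bij_betw_def by blast
lemma psi_inj: "x \<in> omega2 \<Longrightarrow> y \<in> omega2 \<Longrightarrow> psi x = psi y \<Longrightarrow> x = y"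
  using psi_bij unfolding bij_betw_def inj_on_def by blast

definition ptI :: "nat set set \<Rightarrow> nat \<Rightarrow> nat set set" where
  "ptI \<xi> k = inv_into omega2 psi (\<xi>, k)"
definition stI :: "nat set set \<Rightarrow> nat set set" where "stI z = fst (psi z)"
definition posI :: "nat set set \<Rightarrow> nat" where "posI z = snd (psi z)"

lemma psi_pt: "\<xi> \<in> omega2 \<Longrightarrow> psi (ptI \<xi> k) = (\<xi>, k)"
  unfolding ptI_def using psi_bij by (simp add: bij_betw_def f_inv_into_f)
lemma pt_in: "\<xi> \<in> omega2 \<Longrightarrow> ptI \<xi> k \<in> omega2"
  unfolding ptI_def using psi_bij by (simp add: bij_betw_def inv_into_into)

lemma RR_wf: "wf RR"
proof -
  have "wf (inv_image Lx psi)" unfolding Lx_def by (rule wf_inv_image[OF wf_lex_prod[OF W2_wf wf_less_than]])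
  moreover have "RR \<subseteq> inv_image Lx psi"
  proof
    fix p assume "p \<in> RR"
    then obtain x y where "p = (x, y)" "(psi x, psi y) \<in> Lx" unfolding RR_def by blast
    then show "p \<in> inv_image Lx psi" unfolding inv_image_def by blast
  qed
  ultimately show ?thesis by (rule wf_subset)
qed

lemma Lx_trans: "trans Lx" unfolding Lx_def by (rule trans_lex_prod[OF W2s_trans trans_less_than])

lemma RR_trans: "trans RR"
proof (rule transI)
  fix x y z assume a: "(x, y) \<in> RR" and b: "(y, z) \<in> RR"
  have "(psi x, psi y) \<in> Lx" "(psi y, psi z) \<in> Lx" using a b unfolding RR_def by blast+
  then have "(psi x, psi z) \<in> Lx" using Lx_trans unfolding trans_def by blast
  moreover have "x \<in> omega2" "z \<in> omega2" using a b unfolding RR_def by blast+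
  ultimately show "(x, z) \<in> RR" unfolding RR_def by blast
qed

lemma RR_tot: "x \<in> omega2 \<Longrightarrow> y \<in> omega2 \<Longrightarrow> x \<noteq> y \<Longrightarrow> (x, y) \<in> RR \<or> (y, x) \<in> RR"
proof -
  assume x: "x \<in> omega2" and y: "y \<in> omega2" and ne: "x \<noteq> y"
  obtain a i where a: "psi x = (a, i)" by (cases "psi x")
  obtain b k where b: "psi y = (b, k)" by (cases "psi y")
  have ab: "a \<in> omega2" "b \<in> omega2" using psi_in[OF x] psi_in[OF y] a b by (metis SigmaD1)+
  have "psi x \<noteq> psi y" using psi_inj[OF x y] ne by blast
  then have ne2: "(a, i) \<noteq> (b, k)" using a b by metis
  have "((a, i), (b, k)) \<in> Lx \<or> ((b, k), (a, i)) \<in> Lx"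
  proof (cases "a = b")
    case True
    then have "i \<noteq> k" using ne2 by blast
    then have "i < k \<or> k < i" by linarith
    then show ?thesis unfolding Lx_iff using True by blast
  next
    case False
    then show ?thesis unfolding Lx_iff using W2_total[OF ab False] by blast
  qed
  then have "(psi x, psi y) \<in> Lx \<or> (psi y, psi x) \<in> Lx" using a b by metis
  then show ?thesis unfolding RR_def using x y by blast
qed

lemma pt_RR: "\<xi> \<in> omega2 \<Longrightarrow> (ptI \<xi> i, ptI \<xi> k) \<in> RR \<longleftrightarrow> i < k"
proof -
  assume x: "\<xi> \<in> omega2"
  have p: "ptI \<xi> i \<in> omega2" "ptI \<xi> k \<in> omega2" using pt_in[OF x] by blast+
  have q: "psi (ptI \<xi> i) = (\<xi>, i)" "psi (ptI \<xi> k) = (\<xi>, k)" using psi_pt[OF x] by blast+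
  have "(ptI \<xi> i, ptI \<xi> k) \<in> RR \<longleftrightarrow> (psi (ptI \<xi> i), psi (ptI \<xi> k)) \<in> Lx"
    unfolding RR_def using p by blast
  also have "\<dots> \<longleftrightarrow> ((\<xi>, i), (\<xi>, k)) \<in> Lx" unfolding q ..
  also have "\<dots> \<longleftrightarrow> i < k" unfolding Lx_iff by blast
  finally show ?thesis .
qed

lemma convexI: "\<xi> \<in> omega2 \<Longrightarrow> (ptI \<xi> i, y) \<in> RR \<Longrightarrow> (y, ptI \<xi> j) \<in> RR \<Longrightarrow> stI y = \<xi>"
proof -
  assume x: "\<xi> \<in> omega2" and h1: "(ptI \<xi> i, y) \<in> RR" and h2: "(y, ptI \<xi> j) \<in> RR"
  obtain b l where b: "psi y = (b, l)" by (cases "psi y")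
  have e1: "(psi (ptI \<xi> i), psi y) \<in> Lx" using h1 unfolding RR_def by blast
  have "((\<xi>, i), (b, l)) \<in> Lx" using e1 by (simp only: psi_pt[OF x] b)
  then have 1: "(\<xi>, b) \<in> W2 - Id \<or> \<xi> = b" unfolding Lx_iff by blast
  have e2: "(psi y, psi (ptI \<xi> j)) \<in> Lx" using h2 unfolding RR_def by blast
  have "((b, l), (\<xi>, j)) \<in> Lx" using e2 by (simp only: psi_pt[OF x] b)
  then have 2: "(b, \<xi>) \<in> W2 - Id \<or> \<xi> = b" unfolding Lx_iff by blast
  have eq: "\<xi> = b" using 1 2 W2s_asym by blast
  have "stI y = b" by (simp only: stI_def b fst_conv)
  then show ?thesis using eq by simp
qed

lemma pt_stI: "z \<in> omega2 \<Longrightarrow> stI z \<in> omega2 \<and> ptI (stI z) (posI z) = z"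
proof -
  assume z: "z \<in> omega2"
  have pz: "psi z \<in> omega2 \<times> UNIV" by (rule psi_in[OF z])
  have e: "(stI z, posI z) = psi z" unfolding stI_def posI_def by (rule prod.collapse)
  have 1: "stI z \<in> omega2" using pz unfolding stI_def mem_Times_iff by blast
  have "inv_into omega2 psi (psi z) = z" by (rule inv_into_f_f[OF bij_betw_imp_inj_on[OF psi_bij] z])
  then have 2: "ptI (stI z) (posI z) = z" unfolding ptI_def e .
  show ?thesis using 1 2 by blast
qed

lemma W2_refl: "\<xi> \<in> omega2 \<Longrightarrow> (\<xi>, \<xi>) \<in> W2"
  using W2_lin unfolding linear_order_on_def partial_order_on_def preorder_on_def refl_on_def by blast

lemma card_refl: "|A| \<le>o |A|" by (rule ordIso_imp_ordLeq[OF card_of_refl])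

lemma Y_small: "z \<in> omega2 \<Longrightarrow> |{y. (y, z) \<in> RR}| \<le>o |omega1|"
proof -
  assume z: "z \<in> omega2"
  let ?Y = "{y. (y, z) \<in> RR}"
  have sz: "stI z \<in> omega2" using pt_stI[OF z] by blast
  have inj: "inj_on psi ?Y" using psi_bij unfolding bij_betw_def inj_on_def RR_def by blast
  have sub: "psi ` ?Y \<subseteq> under W2 (stI z) \<times> UNIV"
  proof
    fix p assume "p \<in> psi ` ?Y"
    then obtain y where y: "(y, z) \<in> RR" "p = psi y" by blast
    obtain b l where b: "psi y = (b, l)" by (cases "psi y")
    obtain a k where a: "psi z = (a, k)" by (cases "psi z")
    have "(psi y, psi z) \<in> Lx" using y unfolding RR_def by blast
    then have "((b, l), (a, k)) \<in> Lx" unfolding a b .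
    then have "(b, a) \<in> W2 - Id \<or> b = a" unfolding Lx_iff by blast
    moreover have "a = stI z" unfolding stI_def a by simp
    ultimately have "(b, stI z) \<in> W2" using W2_refl[OF sz] by blast
    then show "p \<in> under W2 (stI z) \<times> UNIV" unfolding under_def using y b by simp
  qed
  have "|?Y| \<le>o |under W2 (stI z) \<times> (UNIV :: nat set)|"
    using card_of_ordLeq[THEN iffD1] inj sub by blast
  moreover have "|under W2 (stI z) \<times> (UNIV :: nat set)| \<le>o |omega1|"
    by (rule card_of_Times_ordLeq_infinite[OF om1_inf under_small[OF sz] nat_small])
  ultimately show ?thesis by (rule ordLeq_transitive)
qed

definition embI :: "nat set set \<Rightarrow> nat set set \<Rightarrow> nat set" where
  "embI z = (SOME f. inj_on f {y. (y, z) \<in> RR} \<and> f ` {y. (y, z) \<in> RR} \<subseteq> omega1)"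

lemma embI: "z \<in> omega2 \<Longrightarrow> inj_on (embI z) {y. (y, z) \<in> RR} \<and> embI z ` {y. (y, z) \<in> RR} \<subseteq> omega1"
proof -
  assume z: "z \<in> omega2"
  have "\<exists>f. inj_on f {y. (y, z) \<in> RR} \<and> f ` {y. (y, z) \<in> RR} \<subseteq> omega1"
    using card_of_ordLeq[THEN iffD2, OF Y_small[OF z]] .
  then show ?thesis unfolding embI_def by (rule someI_ex)
qed

definition prI :: "nat set \<times> nat set \<Rightarrow> nat set" where
  "prI = (SOME f. inj_on f (omega1 \<times> omega1) \<and> f ` (omega1 \<times> omega1) \<subseteq> omega1)"

lemma prI: "inj_on prI (omega1 \<times> omega1) \<and> prI ` (omega1 \<times> omega1) \<subseteq> omega1"
proof -
  have "|omega1 \<times> omega1| \<le>o |omega1|"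
    by (rule card_of_Times_ordLeq_infinite[OF om1_inf card_refl card_refl])
  then have "\<exists>f. inj_on f (omega1 \<times> omega1) \<and> f ` (omega1 \<times> omega1) \<subseteq> omega1"
    using card_of_ordLeq[THEN iffD2] by blast
  then show ?thesis unfolding prI_def by (rule someI_ex)
qed

definition A0 :: "(nat set set + nat) set" where "A0 = omega2 <+> (UNIV :: nat set)"

type_synonym reqT = "(nat set set + nat) set \<times> ((nat set set + nat) set \<Rightarrow> nat set) \<times> (nat set set + nat \<Rightarrow> nat set set)"

definition Qset :: "reqT set" where
  "Qset = {(d, e, s). finite d \<and> d \<subseteq> A0 \<and> (\<forall>p. p \<notin> pairs d \<longrightarrow> e p = undefined) \<and> (\<forall>p\<in>pairs d. e p \<in> omega1) \<and>
      (\<forall>x. x \<notin> d \<longrightarrow> s x = undefined) \<and> (\<forall>x\<in>d. s x \<in> omega2)}"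

definition enc :: "reqT \<Rightarrow> _" where
  "enc q = (case q of (d, e, s) \<Rightarrow> (d, (\<lambda>p. (p, e p)) ` pairs d, (\<lambda>x. (x, s x)) ` d))"

lemma pairs_sub: "pairs d \<subseteq> Pow d" unfolding pairs_def by blast
lemma pairs_fin: "finite d \<Longrightarrow> finite (pairs d)" using pairs_sub finite_Pow_iff finite_subset by metis
lemma pairs_elem_fin: "p \<in> pairs d \<Longrightarrow> finite p \<and> p \<subseteq> d" unfolding pairs_def by blast

lemma enc_into: "enc ` Qset \<subseteq> Fpow A0 \<times> Fpow (Fpow A0 \<times> omega1) \<times> Fpow (A0 \<times> omega2)"
proof
  fix t assume "t \<in> enc ` Qset"
  then obtain d e s where q: "(d, e, s) \<in> Qset" "t = enc (d, e, s)" by (metis prod_cases3 imageE)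
  have d: "finite d" "d \<subseteq> A0" "\<forall>p\<in>pairs d. e p \<in> omega1" "\<forall>x\<in>d. s x \<in> omega2" using q(1) unfolding Qset_def by auto
  have 1: "d \<in> Fpow A0" using d unfolding Fpow_def by blast
  have 2: "(\<lambda>p. (p, e p)) ` pairs d \<in> Fpow (Fpow A0 \<times> omega1)"
    unfolding Fpow_def using pairs_fin[OF d(1)] pairs_elem_fin d(2,3) unfolding Fpow_def by blast
  have 3: "(\<lambda>x. (x, s x)) ` d \<in> Fpow (A0 \<times> omega2)" unfolding Fpow_def using d by blast
  show "t \<in> Fpow A0 \<times> Fpow (Fpow A0 \<times> omega1) \<times> Fpow (A0 \<times> omega2)"
    using 1 2 3 q(2) unfolding enc_def by simp
qed

lemma enc_inj: "inj_on enc Qset"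
proof (rule inj_onI)
  fix q1 q2 assume q1: "q1 \<in> Qset" and q2: "q2 \<in> Qset" and eq: "enc q1 = enc q2"
  obtain d1 e1 s1 where a: "q1 = (d1, e1, s1)" by (cases q1)
  obtain d2 e2 s2 where b: "q2 = (d2, e2, s2)" by (cases q2)
  have E: "d1 = d2" "(\<lambda>p. (p, e1 p)) ` pairs d1 = (\<lambda>p. (p, e2 p)) ` pairs d2"
     "(\<lambda>x. (x, s1 x)) ` d1 = (\<lambda>x. (x, s2 x)) ` d2" using eq unfolding a b enc_def by auto
  have ee: "e1 = e2"
  proof
    fix p show "e1 p = e2 p"
    proof (cases "p \<in> pairs d1")
      case True
      then have "(p, e1 p) \<in> (\<lambda>p. (p, e2 p)) ` pairs d2" using E(2) by blast
      then show ?thesis by auto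
    next
      case False then show ?thesis using q1 q2 E(1) unfolding a b Qset_def by auto
    qed
  qed
  have ss: "s1 = s2"
  proof
    fix x show "s1 x = s2 x"
    proof (cases "x \<in> d1")
      case True
      then have "(x, s1 x) \<in> (\<lambda>x. (x, s2 x)) ` d2" using E(3) by blast
      then show ?thesis by auto
    next
      case False then show ?thesis using q1 q2 E(1) unfolding a b Qset_def by auto
    qed
  qed
  show "q1 = q2" unfolding a b using E(1) ee ss by simp
qed

lemma fpow_small: "|X| \<le>o |omega2| \<Longrightarrow> |Fpow X| \<le>o |omega2|"
proof -
  assume "|X| \<le>o |omega2|"
  then have "|Fpow X| \<le>o |Fpow omega2|" by (rule card_of_Fpow_mono)
  moreover have "|Fpow omega2| =o |omega2|" by (rule card_of_Fpow_infinite[OF om2_inf])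
  ultimately show ?thesis by (rule ordLeq_ordIso_trans)
qed

lemma times_small: "|X| \<le>o |omega2| \<Longrightarrow> |Z| \<le>o |omega2| \<Longrightarrow> |X \<times> Z| \<le>o |omega2|"
  by (rule card_of_Times_ordLeq_infinite[OF om2_inf])

lemma A0_small: "|A0| \<le>o |omega2|"
proof -
  have "|omega2 <+> (UNIV :: nat set)| =o |omega2|" using card_of_Plus_infinite[OF om2_inf nat_small2] by blast
  then show ?thesis unfolding A0_def by (rule ordIso_imp_ordLeq)
qed

lemma Q_small: "|Qset| \<le>o |omega2|"
proof -
  have a: "|Fpow A0| \<le>o |omega2|" by (rule fpow_small[OF A0_small])
  have b: "|Fpow (Fpow A0 \<times> omega1)| \<le>o |omega2|" by (rule fpow_small[OF times_small[OF a om12]])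
  have c: "|Fpow (A0 \<times> omega2)| \<le>o |omega2|" by (rule fpow_small[OF times_small[OF A0_small card_refl]])
  have "|Fpow A0 \<times> Fpow (Fpow A0 \<times> omega1) \<times> Fpow (A0 \<times> omega2)| \<le>o |omega2|"
    by (rule times_small[OF a times_small[OF b c]])
  moreover have "|Qset| \<le>o |Fpow A0 \<times> Fpow (Fpow A0 \<times> omega1) \<times> Fpow (A0 \<times> omega2)|"
    using card_of_ordLeq[THEN iffD1] enc_inj enc_into by blast
  ultimately show ?thesis using ordLeq_transitive by blast
qed

definition jq :: "nat set set \<times> reqT \<Rightarrow> nat set set" where
  "jq = (SOME f. inj_on f (omega2 \<times> Qset) \<and> f ` (omega2 \<times> Qset) \<subseteq> omega2)"

lemma jq: "inj_on jq (omega2 \<times> Qset) \<and> jq ` (omega2 \<times> Qset) \<subseteq> omega2"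
proof -
  have "|omega2 \<times> Qset| \<le>o |omega2|" by (rule times_small[OF card_refl Q_small])
  then have "\<exists>f. inj_on f (omega2 \<times> Qset) \<and> f ` (omega2 \<times> Qset) \<subseteq> omega2"
    using card_of_ordLeq[THEN iffD2] by blast
  then show ?thesis unfolding jq_def by (rule someI_ex)
qed

definition BkI :: "nat set set \<Rightarrow> reqT" where
  "BkI \<xi> = (if \<xi> \<in> jq ` (omega2 \<times> Qset) then snd (inv_into (omega2 \<times> Qset) jq \<xi>) else undefined)"

lemma cofinal:
  assumes q: "q \<in> Qset" and B0: "finite B0" "B0 \<subseteq> omega2"
  shows "\<exists>\<xi>\<in>omega2. BkI \<xi> = q \<and> (\<forall>\<beta>\<in>B0. (\<beta>, \<xi>) \<in> W2 - Id)"
proof (rule ccontr)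
  assume no: "\<not> ?thesis"
  let ?X = "(\<lambda>\<xi>. jq (\<xi>, q)) ` omega2"
  have injq: "inj_on jq (omega2 \<times> Qset)" using jq by blast
  have Xin: "?X \<subseteq> omega2" using jq q by blast
  have Bk: "\<And>\<zeta>. \<zeta> \<in> omega2 \<Longrightarrow> BkI (jq (\<zeta>, q)) = q"
  proof -
    fix \<zeta> assume "\<zeta> \<in> omega2"
    then have m: "(\<zeta>, q) \<in> omega2 \<times> Qset" using q by blast
    then have "inv_into (omega2 \<times> Qset) jq (jq (\<zeta>, q)) = (\<zeta>, q)" by (rule inv_into_f_f[OF injq])
    then show "BkI (jq (\<zeta>, q)) = q" unfolding BkI_def using m by simp
  qed
  have sub: "?X \<subseteq> (\<Union>\<beta>\<in>B0. under W2 \<beta>)"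
  proof
    fix \<xi> assume x: "\<xi> \<in> ?X"
    then obtain \<zeta> where z: "\<zeta> \<in> omega2" "\<xi> = jq (\<zeta>, q)" by blast
    have xo: "\<xi> \<in> omega2" using x Xin by blast
    have "BkI \<xi> = q" using Bk z by simp
    then obtain \<beta> where b: "\<beta> \<in> B0" "(\<beta>, \<xi>) \<notin> W2 - Id" using no xo by blast
    have bo: "\<beta> \<in> omega2" using b B0 by blast
    have "(\<xi>, \<beta>) \<in> W2"
    proof (cases "\<xi> = \<beta>")
      case True then show ?thesis using W2_refl bo by simp
    next
      case False then show ?thesis using W2_total[OF xo bo False] b by blast
    qed
    then show "\<xi> \<in> (\<Union>\<beta>\<in>B0. under W2 \<beta>)" using b unfolding under_def by blast
  qed
  have "|\<Union>\<beta>\<in>B0. under W2 \<beta>| \<le>o |omega1|"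
    by (rule card_of_UNION_ordLeq_infinite[OF om1_inf fin_small[OF B0(1)]]) (use under_small B0 in blast)
  then have X1: "|?X| \<le>o |omega1|" using card_of_mono1[OF sub] ordLeq_transitive by blast
  have "inj_on (\<lambda>\<xi>. jq (\<xi>, q)) omega2" using injq q unfolding inj_on_def by blast
  then have "|omega2| \<le>o |?X|" using card_of_ordLeq[THEN iffD1] by blast
  then have "|omega2| \<le>o |omega1|" using X1 ordLeq_transitive by blast
  then show False using om1_less not_ordLess_ordLeq by blast
qed


lemma core_inst:
  assumes L: "lrcorner"
  shows "core omega1 prI (SOME x. x \<in> omega1) omega2 RR embI omega2 ptI stI posI BkI"
proof (unfold_locales)
  fix f F m
  assume "\<forall>\<alpha>\<in>omega1. \<forall>\<beta>\<in>omega1. f \<alpha> \<beta> \<in> omega1" "F \<in> finsubs omega1" "monotone_fin omega1 m"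
  then show "\<exists>g. LRc omega1 f F m g" using L unfolding lrcorner_def LRc_def by blast
next
  show "inj_on prI (omega1 \<times> omega1)" using prI by blast
next
  fix u v assume "u \<in> omega1" "v \<in> omega1"
  then show "prI (u, v) \<in> omega1" using prI by blast
next
  have "omega1 \<noteq> {}" using om1_inf by auto
  then show "(SOME x. x \<in> omega1) \<in> omega1" by (simp add: some_in_eq)
next
  show "wf RR" by (rule RR_wf)
next
  show "RR \<subseteq> omega2 \<times> omega2" unfolding RR_def by blast
next
  show "trans RR" by (rule RR_trans)
next
  fix x y assume "x \<in> omega2" "y \<in> omega2" "x \<noteq> y"
  then show "(x, y) \<in> RR \<or> (y, x) \<in> RR" by (rule RR_tot)
next
  fix z assume "z \<in> omega2"
  then show "inj_on (embI z) {y. (y, z) \<in> RR} \<and> embI z ` {y. (y, z) \<in> RR} \<subseteq> omega1" by (rule embI)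
next
  fix \<xi> k assume "\<xi> \<in> omega2" then show "ptI \<xi> k \<in> omega2" by (rule pt_in)
next
  fix \<xi> k assume "\<xi> \<in> omega2" then show "stI (ptI \<xi> k) = \<xi>" unfolding stI_def using psi_pt by simp
next
  fix \<xi> k assume "\<xi> \<in> omega2" then show "posI (ptI \<xi> k) = k" unfolding posI_def using psi_pt by simp
next
  fix z assume "z \<in> omega2" then show "stI z \<in> omega2 \<and> ptI (stI z) (posI z) = z" by (rule pt_stI)
next
  fix \<xi> i k assume "\<xi> \<in> omega2" then show "(ptI \<xi> i, ptI \<xi> k) \<in> RR \<longleftrightarrow> i < k" by (rule pt_RR)
next
  fix \<xi> i j y assume "\<xi> \<in> omega2" "(ptI \<xi> i, y) \<in> RR" "(y, ptI \<xi> j) \<in> RR"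
  then show "stI y = \<xi>" by (rule convexI)
next
  fix d :: "(nat set set + nat) set" and e :: "(nat set set + nat) set \<Rightarrow> nat set" and s :: "nat set set + nat \<Rightarrow> nat set set"
  assume h: "finite d" "d \<subseteq> Inl ` omega2 \<union> range Inr"
     "\<forall>p. p \<notin> pairs d \<longrightarrow> e p = undefined" "\<forall>p\<in>pairs d. e p \<in> omega1"
     "\<forall>x. x \<notin> d \<longrightarrow> s x = undefined" "\<forall>x\<in>d. s x \<in> omega2"
  have A: "d \<subseteq> A0" using h(2) unfolding A0_def Plus_def by blast
  have q: "(d, e, s) \<in> Qset" unfolding Qset_def using h A by blast
  let ?B = "stI ` {\<alpha>. Inl \<alpha> \<in> d}"
  have fB: "finite ?B"
  proof -
    have "{\<alpha>. Inl \<alpha> \<in> d} = Inl -` d" by auto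
    then have "finite {\<alpha>. Inl \<alpha> \<in> d}" using finite_vimageI[of d Inl] h(1) by simp
    then show ?thesis by blast
  qed
  have inl: "\<And>\<alpha>. Inl \<alpha> \<in> d \<Longrightarrow> \<alpha> \<in> omega2" using h(2) by blast
  have sB: "?B \<subseteq> omega2" using inl pt_stI by blast
  obtain \<xi> where x: "\<xi> \<in> omega2" "BkI \<xi> = (d, e, s)" "\<forall>\<beta>\<in>?B. (\<beta>, \<xi>) \<in> W2 - Id"
    using cofinal[OF q fB sB] by blast
  have "\<forall>\<alpha>. Inl \<alpha> \<in> d \<longrightarrow> (\<alpha>, ptI \<xi> 0) \<in> RR"
  proof (intro allI impI)
    fix \<alpha> assume a: "Inl \<alpha> \<in> d"
    have ao: "\<alpha> \<in> omega2" by (rule inl[OF a])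
    have "(stI \<alpha>, \<xi>) \<in> W2 - Id" using x(3) a by blast
    then have "((stI \<alpha>, posI \<alpha>), (\<xi>, 0)) \<in> Lx" unfolding Lx_iff by blast
    moreover have "psi \<alpha> = (stI \<alpha>, posI \<alpha>)" unfolding stI_def posI_def by simp
    moreover have "psi (ptI \<xi> 0) = (\<xi>, 0)" by (rule psi_pt[OF x(1)])
    ultimately have "(psi \<alpha>, psi (ptI \<xi> 0)) \<in> Lx" by simp
    then show "(\<alpha>, ptI \<xi> 0) \<in> RR" unfolding RR_def using ao pt_in[OF x(1)] by blast
  qed
  then show "\<exists>\<xi>\<in>omega2. BkI \<xi> = (d, e, s) \<and> (\<forall>\<alpha>. Inl \<alpha> \<in> d \<longrightarrow> (\<alpha>, ptI \<xi> 0) \<in> RR)"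
    using x by blast
next
  show "omega2 \<noteq> {}" using om2_inf by auto
qed

theorem mainTheorem11:
  assumes "lrcorner"
  shows "\<exists>(c :: nat set set set \<Rightarrow> nat set) m (r :: nat set set \<Rightarrow> nat set set).
    (\<forall>p\<in>pairs omega2. c p \<in> omega1) \<and>
    monotone_fin omega2 m \<and>
    (\<forall>\<alpha>\<in>omega2. r \<alpha> \<in> omega2) \<and>
    (\<forall>a\<in>finsubs omega2. \<forall>\<alpha>\<in>m a. \<forall>\<beta>\<in>m a. \<alpha> \<noteq> \<beta> \<longrightarrow> Aset c omega2 \<alpha> \<beta> \<subseteq> m a) \<and>
    (\<forall>d e s. finite d \<and> d \<subseteq> omega2_plus_omega \<and>
       (\<forall>p\<in>pairs d. e p \<in> omega1) \<and>
       (\<forall>\<alpha>\<in>d. s \<alpha> \<in> omega2) \<and>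
       (\<forall>\<alpha> \<beta>. Inl \<alpha> \<in> d \<and> Inl \<beta> \<in> d \<and> \<alpha> \<noteq> \<beta> \<longrightarrow> c {\<alpha>, \<beta>} = e {Inl \<alpha>, Inl \<beta>}) \<and>
       (\<forall>\<alpha>. Inl \<alpha> \<in> d \<longrightarrow> r \<alpha> = s (Inl \<alpha>)) \<and>
       (\<forall>\<alpha> \<beta>. Inl \<alpha> \<in> d \<and> Inl \<beta> \<in> d \<and> \<alpha> \<noteq> \<beta> \<longrightarrow> Aset e d (Inl \<alpha>) (Inl \<beta>) \<subseteq> Inl ` omega2)
     \<longrightarrow> (\<exists>\<iota>. inj_on \<iota> d \<and> (\<forall>\<alpha>\<in>d. \<iota> \<alpha> \<in> omega2) \<and>
            (\<forall>\<alpha>. Inl \<alpha> \<in> d \<longrightarrow> \<iota> (Inl \<alpha>) = \<alpha>) \<and>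
            (\<forall>\<alpha>\<in>d. \<forall>\<beta>\<in>d. \<alpha> \<noteq> \<beta> \<longrightarrow> c {\<iota> \<alpha>, \<iota> \<beta>} = e {\<alpha>, \<beta>}) \<and>
            (\<forall>\<alpha>\<in>d. r (\<iota> \<alpha>) = s \<alpha>)))"
proof -
  interpret core omega1 prI "SOME x. x \<in> omega1" omega2 RR embI omega2 ptI stI posI BkI
    by (rule core_inst[OF assms])
  show ?thesis unfolding omega2_plus_omega_def by (rule core_main)
qed

end
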